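(* Let $1/2<H<1$, let $Z$ be a continuous fractional Brownian motion with Hurst parameter $H$, let $\alpha>0$, $a_t:=H\mathrm{e}^{\alpha t/H}/\alpha$, and $Y^{(\alpha)}_t:=\int_0^t\mathrm{e}^{-\alpha s}\,dZ_{a_s}$ (pathwise Riemann–Stieltjes integral), $t\ge0$. Then the increments of $Y^{(\alpha)}$ are positively correlated, i.e. $\mathbf{E}\big((Y^{(\alpha)}_{t_2}-Y^{(\alpha)}_{t_1})(Y^{(\alpha)}_{s_2}-Y^{(\alpha)}_{s_1})\big)>0$ for all $t_2>t_1\ge0$, $s_2>s_1\ge0$. The increment process $I_Y:=\{Y^{(\alpha)}_{n+1}-Y^{(\alpha)}_n:n=0,1,\dots\}$ is stationary and short range dependent.
   Context: A fractional Brownian motion with Hurst parameter $H$ is a centered Gaussian process on $[0,\infty)$ with covariance $\frac12(t^{2H}+s^{2H}-|t-s|^{2H})$. A stationary second order mean-zero sequence $X=\{X_n\}$ with $\rho_X(n)=\mathbf{E}(X_iX_{i+n})$ is short range dependent if $\lim_{k\to\infty}\sum_{n=0}^k\rho_X(n)$ exists. *)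

theory Defs
  imports "HOL-Probability.Probability"
begin

definition has_RS_integral ::
  "(real \<Rightarrow> real) \<Rightarrow> (real \<Rightarrow> real) \<Rightarrow> real \<Rightarrow> real \<Rightarrow> real \<Rightarrow> bool" where
  "has_RS_integral f g a b I \<longleftrightarrow>
     (\<forall>e>0. \<exists>d>0. \<forall>(n::nat) (x::nat \<Rightarrow> real) (\<xi>::nat \<Rightarrow> real).
        x 0 = a \<and> x n = b \<and>
        (\<forall>i<n. x i \<le> \<xi> i \<and> \<xi> i \<le> x (Suc i) \<and> x (Suc i) - x i < d)
        \<longrightarrow> \<bar>(\<Sum>i<n. f (\<xi> i) * (g (x (Suc i)) - g (x i))) - I\<bar> < e)"

definition RS_integral ::
  "(real \<Rightarrow> real) \<Rightarrow> (real \<Rightarrow> real) \<Rightarrow> real \<Rightarrow> real \<Rightarrow> real" where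
  "RS_integral f g a b = (THE I. has_RS_integral f g a b I)"

definition gaussian_process :: "'a measure \<Rightarrow> (real \<Rightarrow> 'a \<Rightarrow> real) \<Rightarrow> bool" where
  "gaussian_process M Z \<longleftrightarrow>
     (\<forall>(n::nat) (t::nat \<Rightarrow> real) (c::nat \<Rightarrow> real). (\<forall>i<n. t i \<ge> 0) \<longrightarrow>
        (\<exists>\<mu> \<sigma>. (\<sigma> > 0 \<and> distributed M lborel (\<lambda>\<omega>. \<Sum>i<n. c i * Z (t i) \<omega>) (normal_density \<mu> \<sigma>))
              \<or> (AE \<omega> in M. (\<Sum>i<n. c i * Z (t i) \<omega>) = \<mu>)))"

definition continuous_fBm :: "'a measure \<Rightarrow> real \<Rightarrow> (real \<Rightarrow> 'a \<Rightarrow> real) \<Rightarrow> bool" where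
  "continuous_fBm M H Z \<longleftrightarrow>
     prob_space M \<and>
     (\<forall>t\<ge>0. Z t \<in> borel_measurable M) \<and>
     gaussian_process M Z \<and>
     (\<forall>t\<ge>0. integrable M (Z t) \<and> (\<integral>\<omega>. Z t \<omega> \<partial>M) = 0) \<and>
     (\<forall>s\<ge>0. \<forall>t\<ge>0. integrable M (\<lambda>\<omega>. Z t \<omega> * Z s \<omega>) \<and>
        (\<integral>\<omega>. Z t \<omega> * Z s \<omega> \<partial>M) = (t powr (2*H) + s powr (2*H) - \<bar>t - s\<bar> powr (2*H)) / 2) \<and>
     (\<forall>\<omega>\<in>space M. continuous_on {0..} (\<lambda>t. Z t \<omega>))"

end

theory Submission
  imports Defs
begin

lemma exp_int:
  fixes \<alpha> a b :: real assumes "a \<le> b"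
  shows "((\<lambda>s. \<alpha> * exp (- \<alpha> * s)) has_integral (exp (- \<alpha> * a) - exp (- \<alpha> * b))) {a..b}"
proof -
  have "((\<lambda>s. \<alpha> * exp (- \<alpha> * s)) has_integral ((\<lambda>s. - exp (- \<alpha> * s)) b - (\<lambda>s. - exp (- \<alpha> * s)) a)) {a..b}"
    apply (rule fundamental_theorem_of_calculus[OF assms])
    apply (auto intro!: derivative_eq_intros simp: has_real_derivative_iff_has_vector_derivative[symmetric])
    done
  then show ?thesis by simp
qed

lemma RS_piece:
  fixes \<alpha> e u0 u1 \<xi> :: real and g :: "real \<Rightarrow> real"
  assumes "u0 \<le> \<xi>" "\<xi> \<le> u1" "continuous_on {u0..u1} g" "\<alpha> > 0"
    and close: "\<And>s. s \<in> {u0..u1} \<Longrightarrow> \<bar>g s - g u0\<bar> \<le> e \<and> \<bar>g s - g u1\<bar> \<le> e"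
  shows "\<bar>exp (- \<alpha> * \<xi>) * (g u1 - g u0) - (exp (- \<alpha> * u1) * g u1 - exp (- \<alpha> * u0) * g u0
           + integral {u0..u1} (\<lambda>s. \<alpha> * exp (- \<alpha> * s) * g s))\<bar>
         \<le> e * (exp (- \<alpha> * u0) - exp (- \<alpha> * u1))"
proof -
  define F where "F s = exp (- \<alpha> * s)" for s
  define h where "h s = \<alpha> * F s * g s" for s
  have cF: "continuous_on S (\<lambda>s. \<alpha> * F s)" for S unfolding F_def by (intro continuous_intros)
  have ch: "continuous_on {u0..u1} h" unfolding h_def F_def using assms(3)
    by (intro continuous_intros) auto
  have c1: "continuous_on {u0..\<xi>} h" by (rule continuous_on_subset[OF ch]) (use assms in auto)
  have c2: "continuous_on {\<xi>..u1} h" by (rule continuous_on_subset[OF ch]) (use assms in auto)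
  have split: "integral {u0..u1} h = integral {u0..\<xi>} h + integral {\<xi>..u1} h"
    using Henstock_Kurzweil_Integration.integral_combine[OF assms(1,2) integrable_continuous_real[OF ch]] by simp
  have i1: "((\<lambda>s. \<alpha> * F s) has_integral (F u0 - F \<xi>)) {u0..\<xi>}"
    unfolding F_def using exp_int assms by auto
  have i2: "((\<lambda>s. \<alpha> * F s) has_integral (F \<xi> - F u1)) {\<xi>..u1}"
    unfolding F_def using exp_int assms by auto
  have k1: "((\<lambda>s. \<alpha> * F s * (g u0 - g s)) has_integral (g u0 * (F u0 - F \<xi>) - integral {u0..\<xi>} h)) {u0..\<xi>}"
  proof -
    have "((\<lambda>s. g u0 * (\<alpha> * F s) - h s) has_integral (g u0 * (F u0 - F \<xi>) - integral {u0..\<xi>} h)) {u0..\<xi>}"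
      by (intro has_integral_diff has_integral_mult_right i1 integrable_integral integrable_continuous_real c1)
    then show ?thesis by (simp add: h_def algebra_simps)
  qed
  have k2: "((\<lambda>s. \<alpha> * F s * (g u1 - g s)) has_integral (g u1 * (F \<xi> - F u1) - integral {\<xi>..u1} h)) {\<xi>..u1}"
  proof -
    have "((\<lambda>s. g u1 * (\<alpha> * F s) - h s) has_integral (g u1 * (F \<xi> - F u1) - integral {\<xi>..u1} h)) {\<xi>..u1}"
      by (intro has_integral_diff has_integral_mult_right i2 integrable_integral integrable_continuous_real c2)
    then show ?thesis by (simp add: h_def algebra_simps)
  qed
  have b1: "\<bar>g u0 * (F u0 - F \<xi>) - integral {u0..\<xi>} h\<bar> \<le> e * (F u0 - F \<xi>)"
  proof -
    have "norm (integral {u0..\<xi>} (\<lambda>s. \<alpha> * F s * (g u0 - g s))) \<le> integral {u0..\<xi>} (\<lambda>s. e * (\<alpha> * F s))"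
    proof (rule integral_norm_bound_integral)
      show "(\<lambda>s. \<alpha> * F s * (g u0 - g s)) integrable_on {u0..\<xi>}" using k1 by blast
      show "(\<lambda>s. e * (\<alpha> * F s)) integrable_on {u0..\<xi>}" using has_integral_mult_right[OF i1] by blast
      fix s assume s: "s \<in> {u0..\<xi>}"
      have "\<bar>g u0 - g s\<bar> \<le> e" using close[of s] s assms by (auto simp: abs_minus_commute)
      moreover have "\<alpha> * F s > 0" using assms unfolding F_def by auto
      ultimately show "norm (\<alpha> * F s * (g u0 - g s)) \<le> e * (\<alpha> * F s)"
        using mult_right_mono[of "\<bar>g u0 - g s\<bar>" e "\<alpha> * F s"]
        using assms(4) by (simp add: abs_mult abs_of_pos mult.commute F_def)
    qed
    also have "\<dots> = e * (F u0 - F \<xi>)" using has_integral_mult_right[OF i1, of e] by (rule integral_unique)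
    finally show ?thesis using integral_unique[OF k1] by simp
  qed
  have b2: "\<bar>g u1 * (F \<xi> - F u1) - integral {\<xi>..u1} h\<bar> \<le> e * (F \<xi> - F u1)"
  proof -
    have "norm (integral {\<xi>..u1} (\<lambda>s. \<alpha> * F s * (g u1 - g s))) \<le> integral {\<xi>..u1} (\<lambda>s. e * (\<alpha> * F s))"
    proof (rule integral_norm_bound_integral)
      show "(\<lambda>s. \<alpha> * F s * (g u1 - g s)) integrable_on {\<xi>..u1}" using k2 by blast
      show "(\<lambda>s. e * (\<alpha> * F s)) integrable_on {\<xi>..u1}" using has_integral_mult_right[OF i2] by blast
      fix s assume s: "s \<in> {\<xi>..u1}"
      have "\<bar>g u1 - g s\<bar> \<le> e" using close[of s] s assms by (auto simp: abs_minus_commute)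
      moreover have "\<alpha> * F s > 0" using assms unfolding F_def by auto
      ultimately show "norm (\<alpha> * F s * (g u1 - g s)) \<le> e * (\<alpha> * F s)"
        using mult_right_mono[of "\<bar>g u1 - g s\<bar>" e "\<alpha> * F s"]
        using assms(4) by (simp add: abs_mult abs_of_pos mult.commute F_def)
    qed
    also have "\<dots> = e * (F \<xi> - F u1)" using has_integral_mult_right[OF i2, of e] by (rule integral_unique)
    finally show ?thesis using integral_unique[OF k2] by simp
  qed
  have "F \<xi> * (g u1 - g u0) - (F u1 * g u1 - F u0 * g u0 + integral {u0..u1} h)
     = (g u0 * (F u0 - F \<xi>) - integral {u0..\<xi>} h) + (g u1 * (F \<xi> - F u1) - integral {\<xi>..u1} h)"
    using split by (simp add: algebra_simps)
  then have "\<bar>F \<xi> * (g u1 - g u0) - (F u1 * g u1 - F u0 * g u0 + integral {u0..u1} h)\<bar> \<le> e * (F u0 - F u1)"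
    using b1 b2 by (smt (verit, ccfv_SIG) abs_triangle_ineq distrib_left)
  then show ?thesis unfolding F_def h_def by simp
qed

lemma partition_mono:
  fixes x :: "nat \<Rightarrow> real"
  assumes "\<forall>i<n. x i \<le> x (Suc i)" "i \<le> j" "j \<le> n"
  shows "x i \<le> x j"
  using assms(2,3)
proof (induction j)
  case 0 then show ?case by simp
next
  case (Suc j)
  show ?case
  proof (cases "i = Suc j")
    case False
    then have "x i \<le> x j" using Suc by auto
    also have "x j \<le> x (Suc j)" using assms(1) Suc by auto
    finally show ?thesis .
  qed simp
qed

lemma sum_integral_partition:
  fixes x :: "nat \<Rightarrow> real" and h :: "real \<Rightarrow> real"
  assumes mono: "\<forall>i<n. x i \<le> x (Suc i)" and ch: "continuous_on {x 0..x n} h"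
  shows "(\<Sum>i<n. integral {x i..x (Suc i)} h) = integral {x 0..x n} h"
proof -
  have "k \<le> n \<Longrightarrow> (\<Sum>i<k. integral {x i..x (Suc i)} h) = integral {x 0..x k} h" for k
  proof (induction k)
    case 0 then show ?case by simp
  next
    case (Suc k)
    have m1: "x 0 \<le> x k" "x k \<le> x (Suc k)" "x (Suc k) \<le> x n"
      using partition_mono[OF mono] Suc.prems by auto
    have "continuous_on {x 0..x (Suc k)} h"
      by (rule continuous_on_subset[OF ch]) (use m1 in auto)
    then have "integral {x 0..x k} h + integral {x k..x (Suc k)} h = integral {x 0..x (Suc k)} h"
      using Henstock_Kurzweil_Integration.integral_combine[OF m1(1,2) integrable_continuous_real] by blast
    then show ?case using Suc by simp
  qed
  then show ?thesis by simp
qed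

definition RSJ :: "real \<Rightarrow> (real \<Rightarrow> real) \<Rightarrow> real \<Rightarrow> real \<Rightarrow> real" where
  "RSJ \<alpha> g u w = exp (- \<alpha> * w) * g w - exp (- \<alpha> * u) * g u
      + integral {u..w} (\<lambda>s. \<alpha> * exp (- \<alpha> * s) * g s)"

lemma RS_exp_exists:
  fixes \<alpha> u w :: real and g :: "real \<Rightarrow> real"
  assumes \<alpha>: "\<alpha> > 0" and uw: "u \<le> w" and cg: "continuous_on {u..w} g"
  shows "has_RS_integral (\<lambda>s. exp (- \<alpha> * s)) g u w (RSJ \<alpha> g u w)"
  unfolding has_RS_integral_def
proof (intro allI impI)
  fix e :: real assume e: "e > 0"
  define F where "F s = exp (- \<alpha> * s)" for s
  define c where "c = F u - F w"
  have c0: "c \<ge> 0" unfolding c_def F_def using \<alpha> uw by auto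
  define e' where "e' = e / (c + 1)"
  have e'0: "e' > 0" unfolding e'_def using e c0 by auto
  have e'c: "e' * c < e" unfolding e'_def using e c0 by (simp add: field_simps)
  have "uniformly_continuous_on {u..w} g"
    by (rule compact_uniformly_continuous[OF cg]) simp
  then obtain d where d: "d > 0" and dg: "\<And>s s'. s \<in> {u..w} \<Longrightarrow> s' \<in> {u..w} \<Longrightarrow> dist s' s < d \<Longrightarrow> dist (g s') (g s) < e'"
    unfolding uniformly_continuous_on_def using e'0 by metis
  show "\<exists>d>0. \<forall>(n::nat) (x::nat \<Rightarrow> real) (\<xi>::nat \<Rightarrow> real).
        x 0 = u \<and> x n = w \<and>
        (\<forall>i<n. x i \<le> \<xi> i \<and> \<xi> i \<le> x (Suc i) \<and> x (Suc i) - x i < d)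
        \<longrightarrow> \<bar>(\<Sum>i<n. exp (- \<alpha> * \<xi> i) * (g (x (Suc i)) - g (x i))) - RSJ \<alpha> g u w\<bar> < e"
  proof (intro exI[of _ d] conjI allI impI d)
    fix n :: nat and x \<xi> :: "nat \<Rightarrow> real"
    assume P: "x 0 = u \<and> x n = w \<and> (\<forall>i<n. x i \<le> \<xi> i \<and> \<xi> i \<le> x (Suc i) \<and> x (Suc i) - x i < d)"
    have mono: "\<forall>i<n. x i \<le> x (Suc i)" using P by force
    have inr: "i \<le> n \<Longrightarrow> x i \<in> {u..w}" for i
      using partition_mono[OF mono, of 0 i] partition_mono[OF mono, of i n] P by auto
    define h where "h s = \<alpha> * exp (- \<alpha> * s) * g s" for s
    define J where "J i = exp (- \<alpha> * x (Suc i)) * g (x (Suc i)) - exp (- \<alpha> * x i) * g (x i)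
           + integral {x i..x (Suc i)} h" for i
    have ch: "continuous_on {u..w} h" unfolding h_def using cg by (intro continuous_intros) auto
    have sumJ: "(\<Sum>i<n. J i) = RSJ \<alpha> g u w"
    proof -
      have "(\<Sum>i<n. J i) = (\<Sum>i<n. exp (- \<alpha> * x (Suc i)) * g (x (Suc i)) - exp (- \<alpha> * x i) * g (x i))
             + (\<Sum>i<n. integral {x i..x (Suc i)} h)"
        unfolding J_def by (simp add: sum.distrib)
      also have "(\<Sum>i<n. exp (- \<alpha> * x (Suc i)) * g (x (Suc i)) - exp (- \<alpha> * x i) * g (x i))
           = exp (- \<alpha> * x n) * g (x n) - exp (- \<alpha> * x 0) * g (x 0)"
        by (rule sum_lessThan_telescope)
      also have "(\<Sum>i<n. integral {x i..x (Suc i)} h) = integral {x 0..x n} h"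
        by (rule sum_integral_partition[OF mono]) (use ch P in simp)
      finally show ?thesis using P unfolding RSJ_def h_def by simp
    qed
    have piece: "\<bar>exp (- \<alpha> * \<xi> i) * (g (x (Suc i)) - g (x i)) - J i\<bar> \<le> e' * (F (x i) - F (x (Suc i)))"
      if i: "i < n" for i
    proof -
      have xi: "x i \<in> {u..w}" "x (Suc i) \<in> {u..w}" using inr i by auto
      have sub: "{x i..x (Suc i)} \<subseteq> {u..w}" using xi by auto
      show ?thesis unfolding J_def h_def F_def
      proof (rule RS_piece)
        show "x i \<le> \<xi> i" "\<xi> i \<le> x (Suc i)" using P i by auto
        show "continuous_on {x i..x (Suc i)} g" using continuous_on_subset[OF cg sub] .
        show "\<alpha> > 0" by fact
        fix s assume s: "s \<in> {x i..x (Suc i)}"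
        have "x (Suc i) - x i < d" using P i by auto
        then have "dist s (x i) < d" "dist s (x (Suc i)) < d" using s by (auto simp: dist_real_def)
        then have "dist (g s) (g (x i)) < e'" "dist (g s) (g (x (Suc i))) < e'"
          using dg[of "x i" s] dg[of "x (Suc i)" s] s sub xi by auto
        then show "\<bar>g s - g (x i)\<bar> \<le> e' \<and> \<bar>g s - g (x (Suc i))\<bar> \<le> e'"
          by (auto simp: dist_real_def)
      qed
    qed
    have "\<bar>(\<Sum>i<n. exp (- \<alpha> * \<xi> i) * (g (x (Suc i)) - g (x i))) - RSJ \<alpha> g u w\<bar>
        = \<bar>\<Sum>i<n. exp (- \<alpha> * \<xi> i) * (g (x (Suc i)) - g (x i)) - J i\<bar>"
      by (simp add: sumJ[symmetric] sum_subtractf)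
    also have "\<dots> \<le> (\<Sum>i<n. \<bar>exp (- \<alpha> * \<xi> i) * (g (x (Suc i)) - g (x i)) - J i\<bar>)"
      by (rule sum_abs)
    also have "\<dots> \<le> (\<Sum>i<n. e' * (F (x i) - F (x (Suc i))))"
      by (rule sum_mono) (use piece in auto)
    also have "\<dots> = e' * (F (x 0) - F (x n))"
      using sum_lessThan_telescope'[of "\<lambda>i. F (x i)" n] by (simp add: sum_distrib_left[symmetric])
    also have "\<dots> = e' * c" unfolding c_def using P by simp
    finally show "\<bar>(\<Sum>i<n. exp (- \<alpha> * \<xi> i) * (g (x (Suc i)) - g (x i))) - RSJ \<alpha> g u w\<bar> < e"
      using e'c by linarith
  qed
qed

definition usum :: "(real \<Rightarrow> real) \<Rightarrow> (real \<Rightarrow> real) \<Rightarrow> real \<Rightarrow> real \<Rightarrow> nat \<Rightarrow> real" where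
  "usum f g u w m = (\<Sum>i<Suc m. f (u + real i * (w - u) / real (Suc m)) *
      (g (u + real (Suc i) * (w - u) / real (Suc m)) - g (u + real i * (w - u) / real (Suc m))))"

lemma RS_usum_tendsto:
  assumes uw: "u \<le> w" and I: "has_RS_integral f g u w I"
  shows "usum f g u w \<longlonglongrightarrow> I"
proof (rule LIMSEQ_I)
  fix r :: real assume r: "r > 0"
  obtain d where d: "d > 0" and D: "\<forall>(n::nat) (x::nat \<Rightarrow> real) (\<xi>::nat \<Rightarrow> real).
        x 0 = u \<and> x n = w \<and>
        (\<forall>i<n. x i \<le> \<xi> i \<and> \<xi> i \<le> x (Suc i) \<and> x (Suc i) - x i < d)
        \<longrightarrow> \<bar>(\<Sum>i<n. f (\<xi> i) * (g (x (Suc i)) - g (x i))) - I\<bar> < r"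
    using I r unfolding has_RS_integral_def by meson
  define N where "N = nat \<lceil>(w - u) / d\<rceil>"
  have N: "(w - u) / d < real (Suc N)" unfolding N_def by linarith
  show "\<exists>N. \<forall>n\<ge>N. norm (usum f g u w n - I) < r"
  proof (intro exI allI impI)
    fix m assume m: "N \<le> m"
    define x where "x i = u + real i * (w - u) / real (Suc m)" for i
    have "(w - u) / d < real (Suc m)" using N m by linarith
    then have step: "(w - u) / real (Suc m) < d" using d by (simp add: field_simps)
    have xs: "x (Suc i) - x i = (w - u) / real (Suc m)" for i
    proof -
      have "real (Suc i) * (w - u) / real (Suc m) - real i * (w - u) / real (Suc m) = (real (Suc i) * (w - u) - real i * (w - u)) / real (Suc m)"
        by (rule diff_divide_distrib[symmetric])
      also have "real (Suc i) * (w - u) - real i * (w - u) = w - u" by (simp add: algebra_simps)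
      finally show ?thesis unfolding x_def by simp
    qed
    have "x 0 = u \<and> x (Suc m) = w \<and> (\<forall>i<Suc m. x i \<le> x i \<and> x i \<le> x (Suc i) \<and> x (Suc i) - x i < d)"
    proof -
      have "x (Suc m) = w" unfolding x_def
        using nonzero_mult_div_cancel_left[of "real (Suc m)" "w - u"] by (simp del: of_nat_Suc)
      moreover have "x 0 = u" by (simp add: x_def)
      moreover have "(w - u) / real (Suc m) \<ge> 0" using uw by simp
      ultimately show ?thesis using xs step by (metis diff_ge_0_iff_ge order_refl)
    qed
    then have "\<bar>(\<Sum>i<Suc m. f (x i) * (g (x (Suc i)) - g (x i))) - I\<bar> < r"
      using D by blast
    then show "norm (usum f g u w m - I) < r" unfolding usum_def x_def by simp
  qed
qed

lemma RS_unique: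
  assumes "u \<le> w" "has_RS_integral f g u w I" "has_RS_integral f g u w I'"
  shows "I = I'"
proof -
  have "usum f g u w \<longlonglongrightarrow> I" by (rule RS_usum_tendsto[OF assms(1,2)])
  moreover have "usum f g u w \<longlonglongrightarrow> I'" by (rule RS_usum_tendsto[OF assms(1,3)])
  ultimately show ?thesis by (rule LIMSEQ_unique)
qed

lemma RS_integral_eq:
  assumes "u \<le> w" "has_RS_integral f g u w I"
  shows "RS_integral f g u w = I"
  unfolding RS_integral_def
proof (rule the_equality)
  show "has_RS_integral f g u w I" by fact
  fix J assume "has_RS_integral f g u w J"
  then show "J = I" using RS_unique[OF assms(1) _ assms(2)] by blast
qed

lemma RSJ_add:
  fixes g :: "real \<Rightarrow> real"
  assumes "0 \<le> t1" "t1 \<le> t2" "continuous_on {0..t2} g"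
  shows "RSJ \<alpha> g 0 t2 - RSJ \<alpha> g 0 t1 = RSJ \<alpha> g t1 t2"
proof -
  have "continuous_on {0..t2} (\<lambda>s. \<alpha> * exp (- \<alpha> * s) * g s)"
    using assms(3) by (intro continuous_intros) auto
  then have "integral {0..t1} (\<lambda>s. \<alpha> * exp (- \<alpha> * s) * g s) + integral {t1..t2} (\<lambda>s. \<alpha> * exp (- \<alpha> * s) * g s)
      = integral {0..t2} (\<lambda>s. \<alpha> * exp (- \<alpha> * s) * g s)"
    using Henstock_Kurzweil_Integration.integral_combine[OF assms(1,2) integrable_continuous_real] by blast
  then show ?thesis unfolding RSJ_def by linarith
qed

definition phi :: "real \<Rightarrow> real \<Rightarrow> real" where "phi p y = \<bar>y\<bar> powr p"
definition Dphi :: "real \<Rightarrow> real \<Rightarrow> real" where "Dphi p y = p * sgn y * \<bar>y\<bar> powr (p - 1)"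
definition Kc :: "real \<Rightarrow> real \<Rightarrow> real \<Rightarrow> real \<Rightarrow> real \<Rightarrow> real" where
  "Kc p a b c d = (phi p (d - a) + phi p (c - b) - phi p (d - b) - phi p (c - a)) / 2"

lemma phi_deriv:
  assumes p: "1 < p"
  shows "(phi p has_real_derivative Dphi p y) (at y)"
proof (cases y "0::real" rule: linorder_cases)
  case greater
  have d: "((\<lambda>z. z powr p) has_real_derivative Dphi p y) (at y)"
    using has_real_derivative_powr[OF greater, of p] greater by (simp add: Dphi_def)
  show ?thesis
    by (rule has_field_derivative_transform_within_open[OF d, of "{0<..}"]) (use greater in \<open>auto simp: phi_def\<close>)
next
  case less
  have "((\<lambda>z. z powr p) has_real_derivative p * (- y) powr (p - 1)) (at (- y))"
    using has_real_derivative_powr[of "-y" p] less by simp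
  then have d0: "((\<lambda>z. (- z) powr p) has_real_derivative p * (- y) powr (p - 1) * (-1)) (at y)"
    by (rule DERIV_chain2) (auto intro!: derivative_eq_intros)
  have d: "((\<lambda>z. (- z) powr p) has_real_derivative Dphi p y) (at y)"
    using d0 less by (simp add: Dphi_def)
  show ?thesis
    by (rule has_field_derivative_transform_within_open[OF d, of "{..<0}"]) (use less in \<open>auto simp: phi_def\<close>)
next
  case equal
  have "((\<lambda>z. (phi p z - phi p 0) / (z - 0)) \<longlongrightarrow> 0) (at 0)"
  proof (rule Lim_null_comparison)
    show "\<forall>\<^sub>F z in at 0. norm ((phi p z - phi p 0) / (z - 0)) \<le> \<bar>z\<bar> powr (p - 1)"
    proof (rule always_eventually, rule allI)
      fix z :: real
      show "norm ((phi p z - phi p 0) / (z - 0)) \<le> \<bar>z\<bar> powr (p - 1)"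
      proof (cases "z = 0")
        case False
        then have "\<bar>z\<bar> powr p = \<bar>z\<bar> powr (p - 1) * \<bar>z\<bar>"
          using powr_add[of "\<bar>z\<bar>" "p - 1" 1] by simp
        then show ?thesis using False by (simp add: phi_def abs_divide)
      qed (simp add: phi_def)
    qed
    have "((\<lambda>z. \<bar>z\<bar>) \<longlongrightarrow> 0) (at (0::real))"
      using tendsto_rabs_zero[OF tendsto_ident_at] by simp
    then show "((\<lambda>z. \<bar>z\<bar> powr (p - 1)) \<longlongrightarrow> 0) (at 0)"
      by (rule tendsto_zero_powrI) (use p in auto)
  qed
  moreover have "Dphi p 0 = 0" by (simp add: Dphi_def)
  ultimately have "(phi p has_real_derivative Dphi p 0) (at 0)"
    unfolding has_field_derivative_iff by simp
  then show ?thesis using equal by simp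
qed

lemma Dphi_neg: "y \<le> 0 \<Longrightarrow> Dphi p y = - (p * (- y) powr (p - 1))"
  by (cases "y = 0") (simp_all add: Dphi_def sgn_if)

lemma Dphi_pos: "0 \<le> y \<Longrightarrow> Dphi p y = p * y powr (p - 1)"
  by (cases "y = 0") (simp_all add: Dphi_def sgn_if)

lemma Dphi_strict_mono:
  assumes p: "1 < p" and yz: "y < z"
  shows "Dphi p y < Dphi p z"
proof -
  have q: "0 < p - 1" and p0: "0 < p" using p by simp_all
  consider "y < 0" "z \<le> 0" | "y < 0" "0 < z" | "0 \<le> y" using yz by linarith
  then show ?thesis
  proof cases
    case 1
    then have "(- z) powr (p - 1) < (- y) powr (p - 1)"
      using yz q by (intro powr_less_mono2) auto
    then have "p * (- z) powr (p - 1) < p * (- y) powr (p - 1)"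
      using p0 by (rule mult_strict_left_mono)
    then show ?thesis using 1 by (simp add: Dphi_neg)
  next
    case 2
    have "(- y) powr (p - 1) > 0" "z powr (p - 1) > 0" using 2 by auto
    then have "p * (- y) powr (p - 1) > 0" "p * z powr (p - 1) > 0" using p0 by simp_all
    then show ?thesis using 2 by (simp add: Dphi_neg Dphi_pos)
  next
    case 3
    then have "y powr (p - 1) < z powr (p - 1)"
      using yz q by (intro powr_less_mono2) auto
    then have "p * y powr (p - 1) < p * z powr (p - 1)"
      using p0 by (rule mult_strict_left_mono)
    then show ?thesis using 3 yz by (simp add: Dphi_pos)
  qed
qed

lemma Dphi_mono:
  assumes p: "1 < p" and yz: "y \<le> z"
  shows "Dphi p y \<le> Dphi p z"
  using Dphi_strict_mono[OF p] yz by (cases "y = z") (auto intro: less_imp_le)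

lemma second_diff_pos:
  assumes p: "1 < p" and h: "h > 0" and k: "k > 0"
  shows "phi p (x + h) + phi p (x + k) < phi p (x + h + k) + phi p x"
proof -
  define \<psi> where "\<psi> y = phi p (y + h) - phi p y" for y
  have der: "DERIV \<psi> y :> Dphi p (y + h) - Dphi p y" for y
  proof -
    have "DERIV (\<lambda>y. phi p (y + h)) y :> Dphi p (y + h) * 1"
      by (rule DERIV_chain2[OF phi_deriv[OF p]]) (auto intro!: derivative_eq_intros)
    then show ?thesis unfolding \<psi>_def
      by (intro DERIV_diff) (auto intro: phi_deriv[OF p])
  qed
  obtain \<xi> where "x < \<xi>" "\<xi> < x + k" and eq: "\<psi> (x + k) - \<psi> x = (x + k - x) * (Dphi p (\<xi> + h) - Dphi p \<xi>)"
    using MVT2[of x "x + k" \<psi> "\<lambda>y. Dphi p (y + h) - Dphi p y"] der k by auto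
  have "Dphi p \<xi> < Dphi p (\<xi> + h)" using Dphi_strict_mono[OF p] h by simp
  then have "\<psi> (x + k) - \<psi> x > 0" using eq k by simp
  then show ?thesis unfolding \<psi>_def by (simp add: algebra_simps)
qed

lemma Kc_pos:
  assumes p: "1 < p" "a < b" "c < d"
  shows "Kc p a b c d > 0"
  using second_diff_pos[OF p(1), of "b - a" "d - c" "c - b"] p unfolding Kc_def
  by (simp add: algebra_simps)

lemma Kc_nonneg:
  assumes p: "1 < p" "a \<le> b" "c \<le> d"
  shows "Kc p a b c d \<ge> 0"
proof (cases "a < b \<and> c < d")
  case True then show ?thesis using Kc_pos[OF p(1)] by (simp add: less_imp_le)
next
  case False
  then have "a = b \<or> c = d" using p by auto
  then show ?thesis unfolding Kc_def by auto
qed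

lemma Kc_sym: "Kc p a b c d = Kc p c d a b"
  unfolding Kc_def phi_def by (simp add: abs_minus_commute algebra_simps)

lemma Kc_tele1:
  fixes x :: "nat \<Rightarrow> real"
  shows "(\<Sum>i<n. Kc p (x i) (x (Suc i)) c d) = Kc p (x 0) (x n) c d"
proof -
  define G where "G t = (phi p (c - t) - phi p (d - t)) / 2" for t
  have "Kc p a b c d = G b - G a" for a b unfolding Kc_def G_def by (simp add: field_simps)
  then show ?thesis using sum_lessThan_telescope[of "\<lambda>i. G (x i)" n] by simp
qed

lemma Kc_tele2:
  fixes y :: "nat \<Rightarrow> real"
  shows "(\<Sum>j<n. Kc p a b (y j) (y (Suc j))) = Kc p a b (y 0) (y n)"
  using Kc_tele1[where p=p and x=y and n=n and c=a and d=b] by (simp add: Kc_sym)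

lemma Kc_scale:
  assumes "l > 0"
  shows "Kc p (l * a) (l * b) (l * c) (l * d) = l powr p * Kc p a b c d"
proof -
  have "phi p (l * x - l * y) = l powr p * phi p (x - y)" for x y
    using assms unfolding phi_def
    by (simp add: right_diff_distrib[symmetric] abs_mult powr_mult)
  then show ?thesis unfolding Kc_def by (simp add: field_simps)
qed

lemma Kc_upper:
  assumes p: "1 < p" and o: "0 \<le> a" "a \<le> b" "b \<le> c" "c \<le> d"
  shows "Kc p a b c d \<le> (b - a) * p * (d - a) powr (p - 1) / 2"
proof -
  have m1: "phi p (c - b) \<le> phi p (c - a)" unfolding phi_def using o p
    by (intro powr_mono2) auto
  have m2: "phi p (d - a) - phi p (d - b) \<le> (b - a) * (p * (d - a) powr (p - 1))"
  proof (cases "a = b")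
    case True then show ?thesis by simp
  next
    case False
    then have ab: "a < b" using o by simp
    obtain \<xi> where "d - b < \<xi>" "\<xi> < d - a" and eq: "phi p (d - a) - phi p (d - b) = (d - a - (d - b)) * Dphi p \<xi>"
      using MVT2[of "d - b" "d - a" "phi p" "Dphi p"] phi_deriv[OF p] ab by auto
    have "Dphi p \<xi> \<le> Dphi p (d - a)" using Dphi_mono[OF p] \<open>\<xi> < d - a\<close> by simp
    also have "\<dots> = p * (d - a) powr (p - 1)" using ab o by (simp add: Dphi_def)
    finally show ?thesis using eq ab by (simp add: mult_left_mono)
  qed
  show ?thesis using m1 m2 unfolding Kc_def by simp
qed

lemma gauss_fourth:
  fixes L :: "'a \<Rightarrow> real"
  assumes ps: "prob_space M" and Lm: "L \<in> borel_measurable M"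
    and mean: "integrable M L" "(\<integral>\<omega>. L \<omega> \<partial>M) = 0"
    and g: "\<exists>\<mu> \<sigma>. (\<sigma> > 0 \<and> distributed M lborel L (normal_density \<mu> \<sigma>)) \<or> (AE \<omega> in M. L \<omega> = \<mu>)"
  shows "integrable M (\<lambda>\<omega>. (L \<omega>) ^ 4) \<and> (\<integral>\<omega>. (L \<omega>) ^ 4 \<partial>M) = 3 * (\<integral>\<omega>. (L \<omega>) ^ 2 \<partial>M) ^ 2"
proof -
  interpret prob_space M by (rule ps)
  obtain \<mu> \<sigma> where cases: "(\<sigma> > 0 \<and> distributed M lborel L (normal_density \<mu> \<sigma>)) \<or> (AE \<omega> in M. L \<omega> = \<mu>)"
    using g by (elim exE)
  show "integrable M (\<lambda>\<omega>. (L \<omega>) ^ 4) \<and> (\<integral>\<omega>. (L \<omega>) ^ 4 \<partial>M) = 3 * (\<integral>\<omega>. (L \<omega>) ^ 2 \<partial>M) ^ 2"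
  proof (cases "\<sigma> > 0 \<and> distributed M lborel L (normal_density \<mu> \<sigma>)")
    case True
    then have s: "\<sigma> > 0" and D: "distributed M lborel L (normal_density \<mu> \<sigma>)" by auto
    have "\<mu> = 0" using normal_distributed_expectation[OF s D] mean by simp
    then have D0: "distributed M lborel L (normal_density 0 \<sigma>)" using D by simp
    have i4: "integrable lborel (\<lambda>x. normal_density 0 \<sigma> x * x ^ 4)"
      using integrable_normal_moment[where k=4 and \<mu>=0 and \<sigma>=\<sigma>, OF s] by simp
    have "integrable M (\<lambda>\<omega>. (L \<omega>) ^ 4)"
      using distributed_integrable[OF D0, of "\<lambda>x. x ^ 4"] i4 by simp
    moreover have "(\<integral>\<omega>. (L \<omega>) ^ 4 \<partial>M) = 3 * \<sigma> ^ 4"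
    proof -
      have "(\<integral>\<omega>. (L \<omega>) ^ 4 \<partial>M) = (\<integral>x. normal_density 0 \<sigma> x * x ^ 4 \<partial>lborel)"
        using distributed_integral[OF D0, of "\<lambda>x. x ^ 4"] by simp
      also have "\<dots> = fact (2 * 2) / ((2 / \<sigma>\<^sup>2)^2 * fact 2)"
        using integral_normal_moment_even[where k=2 and \<mu>=0 and \<sigma>=\<sigma>, OF s] by simp
      also have "\<dots> = 3 * \<sigma> ^ 4" using s by (simp add: fact_numeral power_divide field_simps flip: power_mult)
      finally show ?thesis .
    qed
    moreover have "(\<integral>\<omega>. (L \<omega>) ^ 2 \<partial>M) = \<sigma> ^ 2"
    proof -
      have "(\<integral>\<omega>. (L \<omega>) ^ 2 \<partial>M) = (\<integral>x. normal_density 0 \<sigma> x * x ^ 2 \<partial>lborel)"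
        using distributed_integral[OF D0, of "\<lambda>x. x ^ 2"] by simp
      also have "\<dots> = fact (2 * 1) / ((2 / \<sigma>\<^sup>2)^1 * fact 1)"
        using integral_normal_moment_even[where k=1 and \<mu>=0 and \<sigma>=\<sigma>, OF s] by simp
      also have "\<dots> = \<sigma> ^ 2" using s by (simp add: field_simps)
      finally show ?thesis .
    qed
    moreover have "(\<sigma> ^ 2) ^ 2 = \<sigma> ^ 4" by (simp flip: power_mult)
    ultimately show ?thesis by simp
  next
    case False
    then have ae: "AE \<omega> in M. L \<omega> = \<mu>" using cases by blast
    have "(\<integral>\<omega>. L \<omega> \<partial>M) = (\<integral>\<omega>. \<mu> \<partial>M)" by (rule integral_cong_AE) (use Lm ae in auto)
    then have "\<mu> = 0" using mean by (simp add: prob_space)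
    then have ae0: "AE \<omega> in M. L \<omega> = 0" using ae by simp
    have "integrable M (\<lambda>\<omega>. (L \<omega>) ^ 4) = integrable M (\<lambda>\<omega>. 0::real)"
      by (rule integrable_cong_AE) (use Lm ae0 in auto)
    moreover have "(\<integral>\<omega>. (L \<omega>) ^ 4 \<partial>M) = (\<integral>\<omega>. 0 \<partial>M)"
      by (rule integral_cong_AE) (use Lm ae0 in auto)
    moreover have "(\<integral>\<omega>. (L \<omega>) ^ 2 \<partial>M) = (\<integral>\<omega>. 0 \<partial>M)"
      by (rule integral_cong_AE) (use Lm ae0 in auto)
    ultimately show ?thesis by simp
  qed
qed

lemma fBm_prob: "continuous_fBm M H Z \<Longrightarrow> prob_space M"
  unfolding continuous_fBm_def by blast

lemma fBm_meas: "continuous_fBm M H Z \<Longrightarrow> 0 \<le> t \<Longrightarrow> Z t \<in> borel_measurable M"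
  unfolding continuous_fBm_def by blast

lemma fBm_int: "continuous_fBm M H Z \<Longrightarrow> 0 \<le> t \<Longrightarrow> integrable M (Z t) \<and> (\<integral>\<omega>. Z t \<omega> \<partial>M) = 0"
  unfolding continuous_fBm_def by blast

lemma fBm_cov: "continuous_fBm M H Z \<Longrightarrow> 0 \<le> t \<Longrightarrow> 0 \<le> s \<Longrightarrow>
   integrable M (\<lambda>\<omega>. Z t \<omega> * Z s \<omega>) \<and>
   (\<integral>\<omega>. Z t \<omega> * Z s \<omega> \<partial>M) = (t powr (2*H) + s powr (2*H) - \<bar>t - s\<bar> powr (2*H)) / 2"
  unfolding continuous_fBm_def by blast

lemma fBm_incr:
  assumes fBm: "continuous_fBm M H Z" and t: "0 \<le> a" "0 \<le> b" "0 \<le> c" "0 \<le> d"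
  shows "integrable M (\<lambda>\<omega>. (Z b \<omega> - Z a \<omega>) * (Z d \<omega> - Z c \<omega>))"
    and "(\<integral>\<omega>. (Z b \<omega> - Z a \<omega>) * (Z d \<omega> - Z c \<omega>) \<partial>M) = Kc (2*H) a b c d"
proof -
  note c1 = fBm_cov[OF fBm t(2) t(4)] and c2 = fBm_cov[OF fBm t(2) t(3)]
   and c3 = fBm_cov[OF fBm t(1) t(4)] and c4 = fBm_cov[OF fBm t(1) t(3)]
  have eq: "(\<lambda>\<omega>. (Z b \<omega> - Z a \<omega>) * (Z d \<omega> - Z c \<omega>)) =
      (\<lambda>\<omega>. Z b \<omega> * Z d \<omega> - Z b \<omega> * Z c \<omega> - Z a \<omega> * Z d \<omega> + Z a \<omega> * Z c \<omega>)"
    by (simp add: fun_eq_iff algebra_simps)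
  have i1: "integrable M (\<lambda>\<omega>. Z b \<omega> * Z d \<omega>)" and i2: "integrable M (\<lambda>\<omega>. Z b \<omega> * Z c \<omega>)"
    and i3: "integrable M (\<lambda>\<omega>. Z a \<omega> * Z d \<omega>)" and i4: "integrable M (\<lambda>\<omega>. Z a \<omega> * Z c \<omega>)"
    using c1 c2 c3 c4 by auto
  show "integrable M (\<lambda>\<omega>. (Z b \<omega> - Z a \<omega>) * (Z d \<omega> - Z c \<omega>))"
    unfolding eq by (intro Bochner_Integration.integrable_add Bochner_Integration.integrable_diff i1 i2 i3 i4)
  have "(\<integral>\<omega>. (Z b \<omega> - Z a \<omega>) * (Z d \<omega> - Z c \<omega>) \<partial>M) =
     (\<integral>\<omega>. Z b \<omega> * Z d \<omega> \<partial>M) - (\<integral>\<omega>. Z b \<omega> * Z c \<omega> \<partial>M) - (\<integral>\<omega>. Z a \<omega> * Z d \<omega> \<partial>M) + (\<integral>\<omega>. Z a \<omega> * Z c \<omega> \<partial>M)"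
    unfolding eq using i1 i2 i3 i4 by (simp add: integral_add integral_diff)
  also have "\<dots> = Kc (2*H) a b c d"
    using c1 c2 c3 c4 unfolding Kc_def phi_def by (simp add: abs_minus_commute field_simps)
  finally show "(\<integral>\<omega>. (Z b \<omega> - Z a \<omega>) * (Z d \<omega> - Z c \<omega>) \<partial>M) = Kc (2*H) a b c d" .
qed

definition lin :: "(real \<Rightarrow> 'a \<Rightarrow> real) \<Rightarrow> nat \<Rightarrow> (nat \<Rightarrow> real) \<Rightarrow> (nat \<Rightarrow> real) \<Rightarrow> (nat \<Rightarrow> real) \<Rightarrow> 'a \<Rightarrow> real" where
  "lin Z n c a b \<omega> = (\<Sum>i<n. c i * (Z (b i) \<omega> - Z (a i) \<omega>))"

lemma lin_meas:
  assumes fBm: "continuous_fBm M H Z" and t: "\<forall>i<n. 0 \<le> a i \<and> 0 \<le> b i"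
  shows "lin Z n c a b \<in> borel_measurable M"
proof -
  have "(\<lambda>\<omega>. c i * (Z (b i) \<omega> - Z (a i) \<omega>)) \<in> borel_measurable M" if "i < n" for i
  proof -
    have "0 \<le> a i" "0 \<le> b i" using t that by auto
    then have "Z (a i) \<in> borel_measurable M" "Z (b i) \<in> borel_measurable M"
      using fBm_meas[OF fBm] by auto
    then show ?thesis by (intro borel_measurable_times borel_measurable_const borel_measurable_diff)
  qed
  then show ?thesis unfolding lin_def by (intro borel_measurable_sum) auto
qed

lemma lin_mean:
  assumes fBm: "continuous_fBm M H Z" and t: "\<forall>i<n. 0 \<le> a i \<and> 0 \<le> b i"
  shows "integrable M (lin Z n c a b) \<and> (\<integral>\<omega>. lin Z n c a b \<omega> \<partial>M) = 0"
proof -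
  have i: "integrable M (\<lambda>\<omega>. c i * (Z (b i) \<omega> - Z (a i) \<omega>)) \<and> (\<integral>\<omega>. c i * (Z (b i) \<omega> - Z (a i) \<omega>) \<partial>M) = 0"
    if "i < n" for i
    using fBm_int[OF fBm, of "a i"] fBm_int[OF fBm, of "b i"] t that by auto
  have "integrable M (\<lambda>\<omega>. \<Sum>i<n. c i * (Z (b i) \<omega> - Z (a i) \<omega>))" using i by auto
  moreover have "(\<integral>\<omega>. (\<Sum>i<n. c i * (Z (b i) \<omega> - Z (a i) \<omega>)) \<partial>M) =
      (\<Sum>i<n. (\<integral>\<omega>. c i * (Z (b i) \<omega> - Z (a i) \<omega>) \<partial>M))"
    by (rule Bochner_Integration.integral_sum) (use i in auto)
  moreover have "(\<Sum>i<n. (\<integral>\<omega>. c i * (Z (b i) \<omega> - Z (a i) \<omega>) \<partial>M)) = 0"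
    using i by (intro sum.neutral) auto
  ultimately show ?thesis unfolding lin_def[abs_def] by simp
qed

lemma lin_prod:
  assumes fBm: "continuous_fBm M H Z" and t: "\<forall>i<n. 0 \<le> a i \<and> 0 \<le> b i" and t': "\<forall>j<m. 0 \<le> a' j \<and> 0 \<le> b' j"
  shows "integrable M (\<lambda>\<omega>. lin Z n c a b \<omega> * lin Z m d a' b' \<omega>)"
    and "(\<integral>\<omega>. lin Z n c a b \<omega> * lin Z m d a' b' \<omega> \<partial>M) =
         (\<Sum>i<n. \<Sum>j<m. c i * d j * Kc (2*H) (a i) (b i) (a' j) (b' j))"
proof -
  have eq: "(\<lambda>\<omega>. lin Z n c a b \<omega> * lin Z m d a' b' \<omega>) =
     (\<lambda>\<omega>. \<Sum>i<n. \<Sum>j<m. c i * d j * ((Z (b i) \<omega> - Z (a i) \<omega>) * (Z (b' j) \<omega> - Z (a' j) \<omega>)))"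
    unfolding lin_def by (simp add: fun_eq_iff sum_product algebra_simps)
  have ii: "integrable M (\<lambda>\<omega>. c i * d j * ((Z (b i) \<omega> - Z (a i) \<omega>) * (Z (b' j) \<omega> - Z (a' j) \<omega>)))
     \<and> (\<integral>\<omega>. c i * d j * ((Z (b i) \<omega> - Z (a i) \<omega>) * (Z (b' j) \<omega> - Z (a' j) \<omega>)) \<partial>M)
        = c i * d j * Kc (2*H) (a i) (b i) (a' j) (b' j)"
    if "i < n" "j < m" for i j
    using fBm_incr[OF fBm, of "a i" "b i" "a' j" "b' j"] t t' that by auto
  have ij: "integrable M (\<lambda>\<omega>. \<Sum>j<m. c i * d j * ((Z (b i) \<omega> - Z (a i) \<omega>) * (Z (b' j) \<omega> - Z (a' j) \<omega>)))"
    if "i < n" for i using ii that by (intro Bochner_Integration.integrable_sum) auto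
  show "integrable M (\<lambda>\<omega>. lin Z n c a b \<omega> * lin Z m d a' b' \<omega>)"
    unfolding eq by (rule Bochner_Integration.integrable_sum) (use ij in auto)
  have "(\<integral>\<omega>. lin Z n c a b \<omega> * lin Z m d a' b' \<omega> \<partial>M) =
     (\<Sum>i<n. (\<integral>\<omega>. (\<Sum>j<m. c i * d j * ((Z (b i) \<omega> - Z (a i) \<omega>) * (Z (b' j) \<omega> - Z (a' j) \<omega>))) \<partial>M))"
    unfolding eq by (rule Bochner_Integration.integral_sum) (use ij in auto)
  also have "\<dots> = (\<Sum>i<n. \<Sum>j<m. (\<integral>\<omega>. c i * d j * ((Z (b i) \<omega> - Z (a i) \<omega>) * (Z (b' j) \<omega> - Z (a' j) \<omega>)) \<partial>M))"
  proof (rule sum.cong[OF refl])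
    fix i assume "i \<in> {..<n}"
    then show "(\<integral>\<omega>. (\<Sum>j<m. c i * d j * ((Z (b i) \<omega> - Z (a i) \<omega>) * (Z (b' j) \<omega> - Z (a' j) \<omega>))) \<partial>M)
       = (\<Sum>j<m. (\<integral>\<omega>. c i * d j * ((Z (b i) \<omega> - Z (a i) \<omega>) * (Z (b' j) \<omega> - Z (a' j) \<omega>)) \<partial>M))"
      by (intro Bochner_Integration.integral_sum) (use ii in auto)
  qed
  also have "\<dots> = (\<Sum>i<n. \<Sum>j<m. c i * d j * Kc (2*H) (a i) (b i) (a' j) (b' j))"
    using ii by (intro sum.cong refl) auto
  finally show "(\<integral>\<omega>. lin Z n c a b \<omega> * lin Z m d a' b' \<omega> \<partial>M) =
         (\<Sum>i<n. \<Sum>j<m. c i * d j * Kc (2*H) (a i) (b i) (a' j) (b' j))" .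
qed

lemma sum_pairs: "(\<Sum>k<2*n. g k) = (\<Sum>i<n. g (2*i) + g (Suc (2*i)))"
  by (induction n) (simp_all add: add.assoc)

lemma lin_gauss:
  assumes fBm: "continuous_fBm M H Z" and t: "\<forall>i<n. 0 \<le> a i \<and> 0 \<le> b i"
  shows "\<exists>\<mu> \<sigma>. (\<sigma> > 0 \<and> distributed M lborel (lin Z n c a b) (normal_density \<mu> \<sigma>))
              \<or> (AE \<omega> in M. lin Z n c a b \<omega> = \<mu>)"
proof -
  define tt where "tt k = (if even k then b (k div 2) else a (k div 2))" for k
  define cc where "cc k = (if even k then c (k div 2) else - c (k div 2))" for k
  have gp: "gaussian_process M Z" using fBm unfolding continuous_fBm_def by blast
  have tt0: "\<forall>k<2*n. 0 \<le> tt k"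
  proof (intro allI impI)
    fix k assume k: "k < 2*n"
    then have "k div 2 < n" by linarith
    then show "0 \<le> tt k" unfolding tt_def using t by simp
  qed
  have o: "(\<exists>\<mu> \<sigma>. (\<sigma> > 0 \<and> distributed M lborel (\<lambda>\<omega>. \<Sum>k<2*n. cc k * Z (tt k) \<omega>) (normal_density \<mu> \<sigma>))
              \<or> (AE \<omega> in M. (\<Sum>k<2*n. cc k * Z (tt k) \<omega>) = \<mu>))"
    using gp[unfolded gaussian_process_def, rule_format, of "2*n" tt cc] tt0 by fast
  have e: "(\<lambda>\<omega>. \<Sum>k<2*n. cc k * Z (tt k) \<omega>) = lin Z n c a b"
  proof
    fix \<omega>
    have h: "cc (2*i) = c i" "cc (Suc (2*i)) = - c i" "tt (2*i) = b i" "tt (Suc (2*i)) = a i" for i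
      by (simp_all add: cc_def tt_def)
    have "(\<Sum>k<2*n. cc k * Z (tt k) \<omega>) = (\<Sum>i<n. cc (2*i) * Z (tt (2*i)) \<omega> + cc (Suc (2*i)) * Z (tt (Suc (2*i))) \<omega>)"
      by (rule sum_pairs)
    also have "\<dots> = (\<Sum>i<n. c i * (Z (b i) \<omega> - Z (a i) \<omega>))"
      unfolding h by (simp add: right_diff_distrib)
    finally show "(\<Sum>k<2*n. cc k * Z (tt k) \<omega>) = lin Z n c a b \<omega>" unfolding lin_def .
  qed
  have e': "(\<Sum>k<2*n. cc k * Z (tt k) \<omega>) = lin Z n c a b \<omega>" for \<omega>
    using e by (rule fun_cong)
  show ?thesis using o by (simp only: e e')
qed

lemma lin_fourth:
  assumes fBm: "continuous_fBm M H Z" and t: "\<forall>i<n. 0 \<le> a i \<and> 0 \<le> b i"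
  shows "integrable M (\<lambda>\<omega>. (lin Z n c a b \<omega>) ^ 4) \<and>
    (\<integral>\<omega>. (lin Z n c a b \<omega>) ^ 4 \<partial>M) = 3 * (\<integral>\<omega>. (lin Z n c a b \<omega>) ^ 2 \<partial>M) ^ 2"
proof -
  have ps: "prob_space M" by (rule fBm_prob[OF fBm])
  have m: "lin Z n c a b \<in> borel_measurable M" by (rule lin_meas[OF fBm t])
  have mn: "integrable M (lin Z n c a b) \<and> (\<integral>\<omega>. lin Z n c a b \<omega> \<partial>M) = 0"
    by (rule lin_mean[OF fBm t])
  have g: "\<exists>\<mu> \<sigma>. (\<sigma> > 0 \<and> distributed M lborel (lin Z n c a b) (normal_density \<mu> \<sigma>)) \<or> (AE \<omega> in M. lin Z n c a b \<omega> = \<mu>)"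
    by (rule lin_gauss[OF fBm t])
  show ?thesis using gauss_fourth[OF ps m conjunct1[OF mn] conjunct2[OF mn] g] .
qed

lemma clip_bound:
  fixes K x :: real assumes K: "K > 0"
  shows "\<bar>x - max (- K) (min K x)\<bar> \<le> x\<^sup>2 / K"
proof (cases "\<bar>x\<bar> \<le> K")
  case True
  then have "max (- K) (min K x) = x" by auto
  then show ?thesis using K by simp
next
  case False
  then have "\<bar>x - max (- K) (min K x)\<bar> \<le> \<bar>x\<bar>" using K by auto
  also have "\<bar>x\<bar> * K \<le> \<bar>x\<bar> * \<bar>x\<bar>" using False K by (intro mult_left_mono) auto
  then have "\<bar>x\<bar> \<le> x\<^sup>2 / K" using K by (simp add: field_simps power2_eq_square abs_mult_self_eq)
  finally show ?thesis .
qed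

lemma sq_int_imp_int:
  fixes f :: "'a \<Rightarrow> real"
  assumes ps: "prob_space M" and fm: "f \<in> borel_measurable M" and sq: "integrable M (\<lambda>\<omega>. (f \<omega>)\<^sup>2)"
  shows "integrable M f"
proof -
  interpret prob_space M by (rule ps)
  have ib: "integrable M (\<lambda>\<omega>. 1 + (f \<omega>)\<^sup>2)" using sq by simp
  have b: "\<bar>f \<omega>\<bar> \<le> 1 + (f \<omega>)\<^sup>2" for \<omega>
  proof (cases "\<bar>f \<omega>\<bar> \<le> 1")
    case False
    then have "\<bar>f \<omega>\<bar> * 1 \<le> \<bar>f \<omega>\<bar> * \<bar>f \<omega>\<bar>" by (intro mult_left_mono) auto
    then show ?thesis by (simp add: power2_eq_square abs_mult_self_eq)
  qed (simp add: add_increasing2)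
  have "norm (f \<omega>) \<le> norm (1 + (f \<omega>)\<^sup>2)" for \<omega>
  proof -
    have "1 + (f \<omega>)\<^sup>2 \<ge> 0" by (simp add: add_nonneg_nonneg)
    then show ?thesis using b[of \<omega>] by simp
  qed
  then have ae: "AE \<omega> in M. norm (f \<omega>) \<le> norm (1 + (f \<omega>)\<^sup>2)" by simp
  show ?thesis by (rule Bochner_Integration.integrable_bound[OF ib fm ae])
qed

lemma tail_bound:
  fixes f :: "'a \<Rightarrow> real"
  assumes ps: "prob_space M" and fm: "f \<in> borel_measurable M" and sq: "integrable M (\<lambda>\<omega>. (f \<omega>)\<^sup>2)"
    and K: "K > 0"
  shows "\<bar>(\<integral>\<omega>. f \<omega> \<partial>M) - (\<integral>\<omega>. max (- K) (min K (f \<omega>)) \<partial>M)\<bar> \<le> (\<integral>\<omega>. (f \<omega>)\<^sup>2 \<partial>M) / K"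
proof -
  interpret prob_space M by (rule ps)
  have fi: "integrable M f" by (rule sq_int_imp_int[OF ps fm sq])
  have cm: "(\<lambda>\<omega>. max (- K) (min K (f \<omega>))) \<in> borel_measurable M" using fm by measurable
  have ci: "integrable M (\<lambda>\<omega>. max (- K) (min K (f \<omega>)))"
    by (rule integrable_const_bound[where B=K]) (use cm K in auto)
  have di: "integrable M (\<lambda>\<omega>. f \<omega> - max (- K) (min K (f \<omega>)))" using fi ci by simp
  have "(\<integral>\<omega>. f \<omega> \<partial>M) - (\<integral>\<omega>. max (- K) (min K (f \<omega>)) \<partial>M) = (\<integral>\<omega>. f \<omega> - max (- K) (min K (f \<omega>)) \<partial>M)"
    using fi ci by simp
  also have "\<bar>\<dots>\<bar> \<le> (\<integral>\<omega>. \<bar>f \<omega> - max (- K) (min K (f \<omega>))\<bar> \<partial>M)"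
    using integral_norm_bound[of M "\<lambda>\<omega>. f \<omega> - max (- K) (min K (f \<omega>))"] by simp
  also have "\<dots> \<le> (\<integral>\<omega>. (f \<omega>)\<^sup>2 / K \<partial>M)"
    by (rule integral_mono) (use di sq clip_bound[OF K] in auto)
  also have "\<dots> = (\<integral>\<omega>. (f \<omega>)\<^sup>2 \<partial>M) / K" by simp
  finally show ?thesis .
qed

lemma vitali:
  fixes X :: "nat \<Rightarrow> 'a \<Rightarrow> real" and L :: "'a \<Rightarrow> real"
  assumes ps: "prob_space M"
    and meas: "\<And>m. X m \<in> borel_measurable M"
    and lim: "\<And>\<omega>. \<omega> \<in> space M \<Longrightarrow> (\<lambda>m. X m \<omega>) \<longlonglongrightarrow> L \<omega>"
    and sq: "\<And>m. integrable M (\<lambda>\<omega>. (X m \<omega>)\<^sup>2)"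
    and bnd: "\<And>m. (\<integral>\<omega>. (X m \<omega>)\<^sup>2 \<partial>M) \<le> C"
  shows "integrable M L" and "(\<lambda>m. \<integral>\<omega>. X m \<omega> \<partial>M) \<longlonglongrightarrow> (\<integral>\<omega>. L \<omega> \<partial>M)"
proof -
  interpret prob_space M by (rule ps)
  have Lm: "L \<in> borel_measurable M"
    by (rule borel_measurable_LIMSEQ_real[OF lim meas])
  have "0 \<le> (\<integral>\<omega>. (X 0 \<omega>)\<^sup>2 \<partial>M)" by (intro integral_nonneg_AE) auto
  then have C0: "0 \<le> C" using bnd[of 0] by linarith
  have fatou: "(\<integral>\<^sup>+\<omega>. ennreal ((L \<omega>)\<^sup>2) \<partial>M) \<le> ennreal C"
  proof -
    have "(\<integral>\<^sup>+\<omega>. ennreal ((L \<omega>)\<^sup>2) \<partial>M) = (\<integral>\<^sup>+\<omega>. liminf (\<lambda>m. ennreal ((X m \<omega>)\<^sup>2)) \<partial>M)"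
    proof (rule nn_integral_cong)
      fix \<omega> assume "\<omega> \<in> space M"
      then have "(\<lambda>m. (X m \<omega>)\<^sup>2) \<longlonglongrightarrow> (L \<omega>)\<^sup>2"
        by (intro tendsto_power lim)
      then have t: "(\<lambda>m. ennreal ((X m \<omega>)\<^sup>2)) \<longlonglongrightarrow> ennreal ((L \<omega>)\<^sup>2)"
        by (rule tendsto_ennrealI)
      show "ennreal ((L \<omega>)\<^sup>2) = liminf (\<lambda>m. ennreal ((X m \<omega>)\<^sup>2))"
        by (rule lim_imp_Liminf[symmetric]) (simp_all add: t)
    qed
    also have "\<dots> \<le> liminf (\<lambda>m. \<integral>\<^sup>+\<omega>. ennreal ((X m \<omega>)\<^sup>2) \<partial>M)"
      by (rule nn_integral_liminf) (use meas in measurable)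
    also have "\<dots> \<le> liminf (\<lambda>m. ennreal C)"
    proof (rule Liminf_mono, rule always_eventually, rule allI)
      fix m
      have "(\<integral>\<^sup>+\<omega>. ennreal ((X m \<omega>)\<^sup>2) \<partial>M) = ennreal (\<integral>\<omega>. (X m \<omega>)\<^sup>2 \<partial>M)"
        by (rule nn_integral_eq_integral) (use sq in auto)
      then show "(\<integral>\<^sup>+\<omega>. ennreal ((X m \<omega>)\<^sup>2) \<partial>M) \<le> ennreal C"
        using bnd[of m] by (simp add: ennreal_leI)
    qed
    also have "\<dots> = ennreal C" by (simp add: Liminf_const)
    finally show ?thesis .
  qed
  have Lsq: "integrable M (\<lambda>\<omega>. (L \<omega>)\<^sup>2)"
  proof (rule integrableI_bounded)
    show "(\<lambda>\<omega>. (L \<omega>)\<^sup>2) \<in> borel_measurable M" using Lm by measurable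
    have "(\<integral>\<^sup>+\<omega>. ennreal (norm ((L \<omega>)\<^sup>2)) \<partial>M) = (\<integral>\<^sup>+\<omega>. ennreal ((L \<omega>)\<^sup>2) \<partial>M)" by simp
    also have "\<dots> < \<infinity>" using fatou by (simp add: le_less_trans)
    finally show "(\<integral>\<^sup>+\<omega>. ennreal (norm ((L \<omega>)\<^sup>2)) \<partial>M) < \<infinity>" .
  qed
  have LC: "(\<integral>\<omega>. (L \<omega>)\<^sup>2 \<partial>M) \<le> C"
  proof -
    have "ennreal (\<integral>\<omega>. (L \<omega>)\<^sup>2 \<partial>M) = (\<integral>\<^sup>+\<omega>. ennreal ((L \<omega>)\<^sup>2) \<partial>M)"
      by (rule nn_integral_eq_integral[symmetric]) (use Lsq in auto)
    then have "ennreal (\<integral>\<omega>. (L \<omega>)\<^sup>2 \<partial>M) \<le> ennreal C" using fatou by simp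
    then show ?thesis using C0 ennreal_le_iff by blast
  qed
  show "integrable M L" by (rule sq_int_imp_int[OF ps Lm Lsq])
  show "(\<lambda>m. \<integral>\<omega>. X m \<omega> \<partial>M) \<longlonglongrightarrow> (\<integral>\<omega>. L \<omega> \<partial>M)"
  proof (rule LIMSEQ_I)
    fix r :: real assume r: "r > 0"
    define K where "K = 4 * (C + 1) / r"
    have K: "K > 0" unfolding K_def using r C0 by simp
    have CK: "2 * (C / K) < r / 2"
    proof -
      have "2 * (C / K) = C * r / (2 * (C + 1))" unfolding K_def using r C0 by (simp add: field_simps)
      also have "\<dots> < r / 2" using r C0 by (simp add: field_simps)
      finally show ?thesis .
    qed
    define cl where "cl x = max (- K) (min K x)" for x
    have clc: "continuous_on UNIV cl" unfolding cl_def by (intro continuous_intros)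
    have dc: "(\<lambda>m. \<integral>\<omega>. cl (X m \<omega>) \<partial>M) \<longlonglongrightarrow> (\<integral>\<omega>. cl (L \<omega>) \<partial>M)"
    proof (rule integral_dominated_convergence[where w="\<lambda>_. K"])
      show "(\<lambda>\<omega>. cl (L \<omega>)) \<in> borel_measurable M" unfolding cl_def using Lm by measurable
      show "(\<lambda>\<omega>. cl (X m \<omega>)) \<in> borel_measurable M" for m unfolding cl_def using meas[of m] by measurable
      show "integrable M (\<lambda>_. K)" by simp
      show "AE \<omega> in M. (\<lambda>m. cl (X m \<omega>)) \<longlonglongrightarrow> cl (L \<omega>)"
      proof (rule AE_I2)
        fix \<omega> assume "\<omega> \<in> space M"
        then show "(\<lambda>m. cl (X m \<omega>)) \<longlonglongrightarrow> cl (L \<omega>)"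
          unfolding cl_def by (intro tendsto_max tendsto_min tendsto_const lim)
      qed
      show "AE \<omega> in M. norm (cl (X m \<omega>)) \<le> K" for m
        using K unfolding cl_def by auto
    qed
    then obtain N where N: "\<And>m. m \<ge> N \<Longrightarrow> norm ((\<integral>\<omega>. cl (X m \<omega>) \<partial>M) - (\<integral>\<omega>. cl (L \<omega>) \<partial>M)) < r / 2"
      using r LIMSEQ_D[of _ _ "r/2"] by (metis half_gt_zero)
    show "\<exists>N. \<forall>m\<ge>N. norm ((\<integral>\<omega>. X m \<omega> \<partial>M) - (\<integral>\<omega>. L \<omega> \<partial>M)) < r"
    proof (intro exI allI impI)
      fix m assume m: "m \<ge> N"
      have t1: "\<bar>(\<integral>\<omega>. X m \<omega> \<partial>M) - (\<integral>\<omega>. cl (X m \<omega>) \<partial>M)\<bar> \<le> C / K"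
        using tail_bound[OF ps meas sq K, of m] bnd[of m] K unfolding cl_def
        by (smt (verit, ccfv_SIG) divide_right_mono)
      have t2: "\<bar>(\<integral>\<omega>. L \<omega> \<partial>M) - (\<integral>\<omega>. cl (L \<omega>) \<partial>M)\<bar> \<le> C / K"
        using tail_bound[OF ps Lm Lsq K] LC K unfolding cl_def
        by (smt (verit, ccfv_SIG) divide_right_mono)
      have "norm ((\<integral>\<omega>. cl (X m \<omega>) \<partial>M) - (\<integral>\<omega>. cl (L \<omega>) \<partial>M)) < r / 2" using N m by simp
      then show "norm ((\<integral>\<omega>. X m \<omega> \<partial>M) - (\<integral>\<omega>. L \<omega> \<partial>M)) < r"
      proof -
        have "\<bar>(\<integral>\<omega>. cl (X m \<omega>) \<partial>M) - (\<integral>\<omega>. cl (L \<omega>) \<partial>M)\<bar> < r / 2"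
          using \<open>norm _ < r / 2\<close> by simp
        then show ?thesis using t1 t2 CK by (simp only: real_norm_def)
      qed
    qed
  qed
qed

definition px :: "real \<Rightarrow> real \<Rightarrow> nat \<Rightarrow> nat \<Rightarrow> real" where
  "px u w m i = u + real i * (w - u) / real (Suc m)"

definition Sm :: "(real \<Rightarrow> 'a \<Rightarrow> real) \<Rightarrow> real \<Rightarrow> (real \<Rightarrow> real) \<Rightarrow> real \<Rightarrow> real \<Rightarrow> nat \<Rightarrow> 'a \<Rightarrow> real" where
  "Sm Z \<alpha> a u w m = lin Z (Suc m) (\<lambda>i. exp (- \<alpha> * px u w m i)) (\<lambda>i. a (px u w m i)) (\<lambda>i. a (px u w m (Suc i)))"

lemma px_0[simp]: "px u w m 0 = u" by (simp add: px_def)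

lemma px_last[simp]: "px u w m (Suc m) = w"
  unfolding px_def using nonzero_mult_div_cancel_left[of "real (Suc m)" "w - u"] by (simp del: of_nat_Suc)

lemma px_step: "px u w m (Suc i) - px u w m i = (w - u) / real (Suc m)"
proof -
  have "real (Suc i) * (w - u) / real (Suc m) - real i * (w - u) / real (Suc m) = (real (Suc i) * (w - u) - real i * (w - u)) / real (Suc m)"
    by (rule diff_divide_distrib[symmetric])
  also have "real (Suc i) * (w - u) - real i * (w - u) = w - u" by (simp add: algebra_simps)
  finally show ?thesis unfolding px_def by simp
qed

lemma px_mono: "u \<le> w \<Longrightarrow> px u w m i \<le> px u w m (Suc i)"
proof -
  assume "u \<le> w"
  then have "(w - u) / real (Suc m) \<ge> 0" by simp
  then show ?thesis using px_step[of u w m i] by linarith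
qed

lemma px_lower: "u \<le> w \<Longrightarrow> u \<le> px u w m i"
  unfolding px_def by (simp add: divide_nonneg_pos)

lemma px_upper: "u \<le> w \<Longrightarrow> i \<le> Suc m \<Longrightarrow> px u w m i \<le> w"
proof -
  assume uw: "u \<le> w" and i: "i \<le> Suc m"
  have "real i * (w - u) \<le> real (Suc m) * (w - u)" using uw i by (intro mult_right_mono) auto
  then have "real i * (w - u) / real (Suc m) \<le> w - u"
    by (simp add: divide_le_eq del: of_nat_Suc) (simp add: mult.commute)
  then show ?thesis unfolding px_def by simp
qed

lemma px_shift: "px (u + s) (w + s) m i = px u w m i + s"
  unfolding px_def by simp

context
  fixes M :: "'a measure" and H \<alpha> :: real and Z :: "real \<Rightarrow> 'a \<Rightarrow> real"
    and a :: "real \<Rightarrow> real" and Y :: "real \<Rightarrow> 'a \<Rightarrow> real"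
  assumes H: "1/2 < H" "H < 1"
    and fBm: "continuous_fBm M H Z"
    and \<alpha>: "\<alpha> > 0"
    and a_def: "\<And>t. a t = H * exp (\<alpha> * t / H) / \<alpha>"
    and Y_def: "\<And>t \<omega>. Y t \<omega> = RS_integral (\<lambda>s. exp (- \<alpha> * s)) (\<lambda>s. Z (a s) \<omega>) 0 t"
begin

lemma p1: "1 < 2 * H" using H by simp

lemma a_pos: "a t > 0" using H \<alpha> by (simp add: a_def)

lemma a_less: "s < t \<Longrightarrow> a s < a t"
  using H \<alpha> by (simp add: a_def divide_strict_right_mono)

lemma a_le: "s \<le> t \<Longrightarrow> a s \<le> a t"
  using a_less[of s t] by (cases "s = t") auto

lemma a_shift: "a (x + s) = exp (\<alpha> * s / H) * a x"
  unfolding a_def by (simp add: distrib_left add_divide_distrib exp_add)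

lemma a_cont: "continuous_on S a"
  unfolding a_def[abs_def] by (intro continuous_intros) (use H \<alpha> in auto)

lemma path_cont: "\<omega> \<in> space M \<Longrightarrow> continuous_on {0..} (\<lambda>s. Z (a s) \<omega>)"
proof -
  assume \<omega>: "\<omega> \<in> space M"
  have "continuous_on {0..} (\<lambda>t. Z t \<omega>)" using fBm \<omega> unfolding continuous_fBm_def by blast
  moreover have "a ` {0..} \<subseteq> {0..}" using a_pos by (auto intro: less_imp_le)
  ultimately show ?thesis by (rule continuous_on_compose2[OF _ a_cont])
qed

lemma times_ok: "\<forall>i<n. 0 \<le> a (x i) \<and> 0 \<le> a (y i)"
  using a_pos by (auto intro: less_imp_le)

lemma Sm_meas: "Sm Z \<alpha> a u w m \<in> borel_measurable M"
  unfolding Sm_def by (rule lin_meas[OF fBm times_ok])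

lemma Sm_mean: "integrable M (Sm Z \<alpha> a u w m) \<and> (\<integral>\<omega>. Sm Z \<alpha> a u w m \<omega> \<partial>M) = 0"
  unfolding Sm_def by (rule lin_mean[OF fBm times_ok])

lemma Y_RSJ: "\<omega> \<in> space M \<Longrightarrow> 0 \<le> t \<Longrightarrow> Y t \<omega> = RSJ \<alpha> (\<lambda>s. Z (a s) \<omega>) 0 t"
proof -
  assume \<omega>: "\<omega> \<in> space M" and t: "0 \<le> t"
  have "continuous_on {0..t} (\<lambda>s. Z (a s) \<omega>)"
    by (rule continuous_on_subset[OF path_cont[OF \<omega>]]) auto
  then have "has_RS_integral (\<lambda>s. exp (- \<alpha> * s)) (\<lambda>s. Z (a s) \<omega>) 0 t (RSJ \<alpha> (\<lambda>s. Z (a s) \<omega>) 0 t)"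
    by (rule RS_exp_exists[OF \<alpha> t])
  then show ?thesis unfolding Y_def by (rule RS_integral_eq[OF t])
qed

lemma Sm_conv:
  assumes \<omega>: "\<omega> \<in> space M" and uw: "0 \<le> u" "u \<le> w"
  shows "(\<lambda>m. Sm Z \<alpha> a u w m \<omega>) \<longlonglongrightarrow> Y w \<omega> - Y u \<omega>"
proof -
  define g where "g s = Z (a s) \<omega>" for s
  have cw: "continuous_on {0..w} g" unfolding g_def
    by (rule continuous_on_subset[OF path_cont[OF \<omega>]]) auto
  have cuw: "continuous_on {u..w} g" by (rule continuous_on_subset[OF cw]) (use uw in auto)
  have I: "has_RS_integral (\<lambda>s. exp (- \<alpha> * s)) g u w (RSJ \<alpha> g u w)"
    by (rule RS_exp_exists[OF \<alpha> uw(2) cuw])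
  have e: "usum (\<lambda>s. exp (- \<alpha> * s)) g u w m = Sm Z \<alpha> a u w m \<omega>" for m
    unfolding usum_def Sm_def lin_def px_def g_def by simp
  have "Y w \<omega> - Y u \<omega> = RSJ \<alpha> g 0 w - RSJ \<alpha> g 0 u"
    using Y_RSJ[OF \<omega>] uw unfolding g_def by simp
  also have "\<dots> = RSJ \<alpha> g u w" by (rule RSJ_add[OF uw cw])
  finally have "Y w \<omega> - Y u \<omega> = RSJ \<alpha> g u w" .
  then show ?thesis using RS_usum_tendsto[OF uw(2) I] unfolding e by simp
qed

lemma dY_meas: "0 \<le> u \<Longrightarrow> u \<le> w \<Longrightarrow> (\<lambda>\<omega>. Y w \<omega> - Y u \<omega>) \<in> borel_measurable M"
  by (rule borel_measurable_LIMSEQ_real[OF Sm_conv Sm_meas])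

lemma Sm_cov:
  "integrable M (\<lambda>\<omega>. Sm Z \<alpha> a u w m \<omega> * Sm Z \<alpha> a u' w' m' \<omega>) \<and>
   (\<integral>\<omega>. Sm Z \<alpha> a u w m \<omega> * Sm Z \<alpha> a u' w' m' \<omega> \<partial>M) =
   (\<Sum>i<Suc m. \<Sum>j<Suc m'. exp (- \<alpha> * px u w m i) * exp (- \<alpha> * px u' w' m' j) *
      Kc (2*H) (a (px u w m i)) (a (px u w m (Suc i))) (a (px u' w' m' j)) (a (px u' w' m' (Suc j))))"
  unfolding Sm_def
  using lin_prod[OF fBm times_ok[where x="px u w m" and y="\<lambda>i. px u w m (Suc i)" and n="Suc m"]
      times_ok[where x="px u' w' m'" and y="\<lambda>i. px u' w' m' (Suc i)" and n="Suc m'"],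
      where c="\<lambda>i. exp (- \<alpha> * px u w m i)" and d="\<lambda>i. exp (- \<alpha> * px u' w' m' i)"]
  by simp

lemma Kc_double_tele:
  "(\<Sum>i<Suc m. \<Sum>j<Suc m'. Kc (2*H) (a (px u w m i)) (a (px u w m (Suc i))) (a (px u' w' m' j)) (a (px u' w' m' (Suc j))))
   = Kc (2*H) (a u) (a w) (a u') (a w')"
proof -
  have "(\<Sum>i<Suc m. \<Sum>j<Suc m'. Kc (2*H) (a (px u w m i)) (a (px u w m (Suc i))) (a (px u' w' m' j)) (a (px u' w' m' (Suc j))))
     = (\<Sum>i<Suc m. Kc (2*H) (a (px u w m i)) (a (px u w m (Suc i))) (a u') (a w'))"
    using Kc_tele2[where y="\<lambda>j. a (px u' w' m' j)"] by simp
  also have "\<dots> = Kc (2*H) (a u) (a w) (a u') (a w')"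
    using Kc_tele1[where x="\<lambda>i. a (px u w m i)"] by simp
  finally show ?thesis .
qed

lemma Kc_piece_nonneg:
  "u \<le> w \<Longrightarrow> u' \<le> w' \<Longrightarrow>
   0 \<le> Kc (2*H) (a (px u w m i)) (a (px u w m (Suc i))) (a (px u' w' m' j)) (a (px u' w' m' (Suc j)))"
  by (intro Kc_nonneg p1 a_le px_mono)

lemma Sm_bounds:
  assumes uw: "0 \<le> u" "u \<le> w" and uw': "0 \<le> u'" "u' \<le> w'"
  shows "exp (- \<alpha> * w) * exp (- \<alpha> * w') * Kc (2*H) (a u) (a w) (a u') (a w')
           \<le> (\<integral>\<omega>. Sm Z \<alpha> a u w m \<omega> * Sm Z \<alpha> a u' w' m' \<omega> \<partial>M)"
    and "(\<integral>\<omega>. Sm Z \<alpha> a u w m \<omega> * Sm Z \<alpha> a u' w' m' \<omega> \<partial>M)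
           \<le> exp (- \<alpha> * u') * Kc (2*H) (a u) (a w) (a u') (a w')"
proof -
  define k where "k i j = Kc (2*H) (a (px u w m i)) (a (px u w m (Suc i))) (a (px u' w' m' j)) (a (px u' w' m' (Suc j)))" for i j
  define c where "c i = exp (- \<alpha> * px u w m i)" for i
  define c' where "c' j = exp (- \<alpha> * px u' w' m' j)" for j
  have k0: "0 \<le> k i j" for i j unfolding k_def by (rule Kc_piece_nonneg[OF uw(2) uw'(2)])
  have cb: "exp (- \<alpha> * w) \<le> c i \<and> c i \<le> 1" if "i < Suc m" for i
  proof -
    have iS: "i \<le> Suc m" using that by simp
    have "px u w m i \<le> w" by (rule px_upper[OF uw(2) iS])
    moreover have "0 \<le> px u w m i" using px_lower[OF uw(2), of m i] uw(1) by linarith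
    ultimately have "px u w m i \<le> w" "0 \<le> px u w m i" by auto
    then show ?thesis unfolding c_def using \<alpha> by (auto simp: mult_le_0_iff)
  qed
  have cb': "exp (- \<alpha> * w') \<le> c' j \<and> c' j \<le> exp (- \<alpha> * u')" if "j < Suc m'" for j
  proof -
    have jS: "j \<le> Suc m'" using that by simp
    have "px u' w' m' j \<le> w'" "u' \<le> px u' w' m' j" by (rule px_upper[OF uw'(2) jS], rule px_lower[OF uw'(2)])
    then show ?thesis unfolding c'_def using \<alpha> by auto
  qed
  have E: "(\<integral>\<omega>. Sm Z \<alpha> a u w m \<omega> * Sm Z \<alpha> a u' w' m' \<omega> \<partial>M) = (\<Sum>i<Suc m. \<Sum>j<Suc m'. c i * c' j * k i j)"
    using Sm_cov unfolding k_def c_def c'_def by blast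
  have T: "(\<Sum>i<Suc m. \<Sum>j<Suc m'. k i j) = Kc (2*H) (a u) (a w) (a u') (a w')"
    unfolding k_def by (rule Kc_double_tele)
  have "exp (- \<alpha> * w) * exp (- \<alpha> * w') * Kc (2*H) (a u) (a w) (a u') (a w')
       = (\<Sum>i<Suc m. \<Sum>j<Suc m'. exp (- \<alpha> * w) * exp (- \<alpha> * w') * k i j)"
    unfolding T[symmetric] by (simp only: sum_distrib_left)
  also have "\<dots> \<le> (\<Sum>i<Suc m. \<Sum>j<Suc m'. c i * c' j * k i j)"
  proof (intro sum_mono mult_right_mono k0)
    fix i j assume "i \<in> {..<Suc m}" "j \<in> {..<Suc m'}"
    then show "exp (- \<alpha> * w) * exp (- \<alpha> * w') \<le> c i * c' j"
      using cb cb' by (intro mult_mono) (auto simp: c_def)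
  qed
  finally show "exp (- \<alpha> * w) * exp (- \<alpha> * w') * Kc (2*H) (a u) (a w) (a u') (a w')
           \<le> (\<integral>\<omega>. Sm Z \<alpha> a u w m \<omega> * Sm Z \<alpha> a u' w' m' \<omega> \<partial>M)" using E by simp
  have "(\<Sum>i<Suc m. \<Sum>j<Suc m'. c i * c' j * k i j) \<le> (\<Sum>i<Suc m. \<Sum>j<Suc m'. exp (- \<alpha> * u') * k i j)"
  proof (intro sum_mono mult_right_mono k0)
    fix i j assume "i \<in> {..<Suc m}" "j \<in> {..<Suc m'}"
    then have "c i \<le> 1" "0 \<le> c' j" "c' j \<le> exp (- \<alpha> * u')" using cb cb' by (auto simp: c'_def)
    then have "c i * c' j \<le> 1 * c' j" by (intro mult_right_mono)
    then show "c i * c' j \<le> exp (- \<alpha> * u')" using \<open>c' j \<le> exp (- \<alpha> * u')\<close> by simp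
  qed
  also have "\<dots> = exp (- \<alpha> * u') * Kc (2*H) (a u) (a w) (a u') (a w')"
    unfolding T[symmetric] by (simp only: sum_distrib_left)
  finally show "(\<integral>\<omega>. Sm Z \<alpha> a u w m \<omega> * Sm Z \<alpha> a u' w' m' \<omega> \<partial>M)
           \<le> exp (- \<alpha> * u') * Kc (2*H) (a u) (a w) (a u') (a w')" using E by simp
qed


lemma Kc_aa_nonneg: "u \<le> w \<Longrightarrow> u' \<le> w' \<Longrightarrow> 0 \<le> Kc (2*H) (a u) (a w) (a u') (a w')"
  by (intro Kc_nonneg p1 a_le)

lemma Sm_sq:
  assumes uw: "0 \<le> u" "u \<le> w"
  shows "integrable M (\<lambda>\<omega>. (Sm Z \<alpha> a u w m \<omega>)\<^sup>2) \<and> 0 \<le> (\<integral>\<omega>. (Sm Z \<alpha> a u w m \<omega>)\<^sup>2 \<partial>M) \<and>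
         (\<integral>\<omega>. (Sm Z \<alpha> a u w m \<omega>)\<^sup>2 \<partial>M) \<le> Kc (2*H) (a u) (a w) (a u) (a w)"
proof -
  have sq: "(\<lambda>\<omega>. (Sm Z \<alpha> a u w m \<omega>)\<^sup>2) = (\<lambda>\<omega>. Sm Z \<alpha> a u w m \<omega> * Sm Z \<alpha> a u w m \<omega>)"
    by (simp add: power2_eq_square)
  have i: "integrable M (\<lambda>\<omega>. Sm Z \<alpha> a u w m \<omega> * Sm Z \<alpha> a u w m \<omega>)" using Sm_cov by blast
  have "(\<integral>\<omega>. Sm Z \<alpha> a u w m \<omega> * Sm Z \<alpha> a u w m \<omega> \<partial>M) \<le> exp (- \<alpha> * u) * Kc (2*H) (a u) (a w) (a u) (a w)"
    by (rule Sm_bounds(2)[OF uw uw])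
  also have "\<dots> \<le> 1 * Kc (2*H) (a u) (a w) (a u) (a w)"
    using \<alpha> uw by (intro mult_right_mono Kc_aa_nonneg) auto
  finally have b: "(\<integral>\<omega>. Sm Z \<alpha> a u w m \<omega> * Sm Z \<alpha> a u w m \<omega> \<partial>M) \<le> Kc (2*H) (a u) (a w) (a u) (a w)" by simp
  have "0 \<le> (\<integral>\<omega>. (Sm Z \<alpha> a u w m \<omega>)\<^sup>2 \<partial>M)" by (intro integral_nonneg_AE) auto
  then show ?thesis unfolding sq using i b by simp
qed

lemma Sm_fourth:
  "integrable M (\<lambda>\<omega>. (Sm Z \<alpha> a u w m \<omega>) ^ 4) \<and>
   (\<integral>\<omega>. (Sm Z \<alpha> a u w m \<omega>) ^ 4 \<partial>M) = 3 * (\<integral>\<omega>. (Sm Z \<alpha> a u w m \<omega>) ^ 2 \<partial>M) ^ 2"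
  unfolding Sm_def by (rule lin_fourth[OF fBm times_ok])

lemma prod_sq_bound:
  assumes uw: "0 \<le> u" "u \<le> w" and uw': "0 \<le> u'" "u' \<le> w'"
  shows "integrable M (\<lambda>\<omega>. (Sm Z \<alpha> a u w m \<omega> * Sm Z \<alpha> a u' w' m \<omega>)\<^sup>2) \<and>
    (\<integral>\<omega>. (Sm Z \<alpha> a u w m \<omega> * Sm Z \<alpha> a u' w' m \<omega>)\<^sup>2 \<partial>M) \<le>
      3 / 2 * ((Kc (2*H) (a u) (a w) (a u) (a w))\<^sup>2 + (Kc (2*H) (a u') (a w') (a u') (a w'))\<^sup>2)"
proof -
  define S where "S = Sm Z \<alpha> a u w m"
  define S' where "S' = Sm Z \<alpha> a u' w' m"
  define V where "V = Kc (2*H) (a u) (a w) (a u) (a w)"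
  define V' where "V' = Kc (2*H) (a u') (a w') (a u') (a w')"
  have f1: "integrable M (\<lambda>\<omega>. (S \<omega>) ^ 4)" "(\<integral>\<omega>. (S \<omega>) ^ 4 \<partial>M) = 3 * (\<integral>\<omega>. (S \<omega>) ^ 2 \<partial>M) ^ 2"
    using Sm_fourth unfolding S_def by auto
  have f2: "integrable M (\<lambda>\<omega>. (S' \<omega>) ^ 4)" "(\<integral>\<omega>. (S' \<omega>) ^ 4 \<partial>M) = 3 * (\<integral>\<omega>. (S' \<omega>) ^ 2 \<partial>M) ^ 2"
    using Sm_fourth unfolding S'_def by auto
  have q1: "0 \<le> (\<integral>\<omega>. (S \<omega>)\<^sup>2 \<partial>M)" "(\<integral>\<omega>. (S \<omega>)\<^sup>2 \<partial>M) \<le> V"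
    using Sm_sq[OF uw] unfolding S_def V_def by auto
  have q2: "0 \<le> (\<integral>\<omega>. (S' \<omega>)\<^sup>2 \<partial>M)" "(\<integral>\<omega>. (S' \<omega>)\<^sup>2 \<partial>M) \<le> V'"
    using Sm_sq[OF uw'] unfolding S'_def V'_def by auto
  have pt: "(x * y)\<^sup>2 \<le> (x ^ 4 + y ^ 4) / 2" for x y :: real
  proof -
    have "0 \<le> (x\<^sup>2 - y\<^sup>2)\<^sup>2" by simp
    then show ?thesis by (simp add: power2_eq_square algebra_simps power4_eq_xxxx)
  qed
  have ib: "integrable M (\<lambda>\<omega>. ((S \<omega>) ^ 4 + (S' \<omega>) ^ 4) / 2)" using f1 f2 by simp
  have ms: "(\<lambda>\<omega>. (S \<omega> * S' \<omega>)\<^sup>2) \<in> borel_measurable M"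
    using Sm_meas unfolding S_def S'_def by measurable
  have "norm ((S \<omega> * S' \<omega>)\<^sup>2) \<le> norm (((S \<omega>) ^ 4 + (S' \<omega>) ^ 4) / 2)" for \<omega>
  proof -
    have "0 \<le> ((S \<omega>) ^ 4 + (S' \<omega>) ^ 4) / 2" by simp
    then show ?thesis using pt[of "S \<omega>" "S' \<omega>"] by simp
  qed
  then have ae: "AE \<omega> in M. norm ((S \<omega> * S' \<omega>)\<^sup>2) \<le> norm (((S \<omega>) ^ 4 + (S' \<omega>) ^ 4) / 2)" by simp
  have ip: "integrable M (\<lambda>\<omega>. (S \<omega> * S' \<omega>)\<^sup>2)"
    by (rule Bochner_Integration.integrable_bound[OF ib ms ae])
  have "(\<integral>\<omega>. (S \<omega> * S' \<omega>)\<^sup>2 \<partial>M) \<le> (\<integral>\<omega>. ((S \<omega>) ^ 4 + (S' \<omega>) ^ 4) / 2 \<partial>M)"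
    by (rule integral_mono[OF ip ib]) (rule pt)
  also have "\<dots> = ((\<integral>\<omega>. (S \<omega>) ^ 4 \<partial>M) + (\<integral>\<omega>. (S' \<omega>) ^ 4 \<partial>M)) / 2"
    using f1 f2 by simp
  also have "\<dots> = 3 / 2 * ((\<integral>\<omega>. (S \<omega>)\<^sup>2 \<partial>M)\<^sup>2 + (\<integral>\<omega>. (S' \<omega>)\<^sup>2 \<partial>M)\<^sup>2)"
    using f1 f2 by simp
  also have "\<dots> \<le> 3 / 2 * (V\<^sup>2 + V'\<^sup>2)"
    using q1 q2 by (intro mult_left_mono add_mono power_mono) auto
  finally show ?thesis using ip unfolding S_def S'_def V_def V'_def by simp
qed

lemma lim_prod:
  assumes uw: "0 \<le> u" "u \<le> w" and uw': "0 \<le> u'" "u' \<le> w'"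
  shows "integrable M (\<lambda>\<omega>. (Y w \<omega> - Y u \<omega>) * (Y w' \<omega> - Y u' \<omega>))"
    and "(\<lambda>m. \<integral>\<omega>. Sm Z \<alpha> a u w m \<omega> * Sm Z \<alpha> a u' w' m \<omega> \<partial>M)
           \<longlonglongrightarrow> (\<integral>\<omega>. (Y w \<omega> - Y u \<omega>) * (Y w' \<omega> - Y u' \<omega>) \<partial>M)"
proof -
  have ps: "prob_space M" by (rule fBm_prob[OF fBm])
  have meas: "(\<lambda>\<omega>. Sm Z \<alpha> a u w m \<omega> * Sm Z \<alpha> a u' w' m \<omega>) \<in> borel_measurable M" for m
    using Sm_meas by (intro borel_measurable_times) auto
  have lim: "(\<lambda>m. Sm Z \<alpha> a u w m \<omega> * Sm Z \<alpha> a u' w' m \<omega>) \<longlonglongrightarrow> (Y w \<omega> - Y u \<omega>) * (Y w' \<omega> - Y u' \<omega>)"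
    if "\<omega> \<in> space M" for \<omega>
    by (intro tendsto_mult Sm_conv that uw uw')
  note pb = prod_sq_bound[OF uw uw']
  show "integrable M (\<lambda>\<omega>. (Y w \<omega> - Y u \<omega>) * (Y w' \<omega> - Y u' \<omega>))"
    by (rule vitali(1)[where C="3 / 2 * ((Kc (2*H) (a u) (a w) (a u) (a w))\<^sup>2 + (Kc (2*H) (a u') (a w') (a u') (a w'))\<^sup>2)", OF ps meas lim]) (use pb in auto)
  show "(\<lambda>m. \<integral>\<omega>. Sm Z \<alpha> a u w m \<omega> * Sm Z \<alpha> a u' w' m \<omega> \<partial>M)
           \<longlonglongrightarrow> (\<integral>\<omega>. (Y w \<omega> - Y u \<omega>) * (Y w' \<omega> - Y u' \<omega>) \<partial>M)"
    by (rule vitali(2)[where C="3 / 2 * ((Kc (2*H) (a u) (a w) (a u) (a w))\<^sup>2 + (Kc (2*H) (a u') (a w') (a u') (a w'))\<^sup>2)", OF ps meas lim]) (use pb in auto)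
qed

lemma lim_single:
  assumes uw: "0 \<le> u" "u \<le> w"
  shows "integrable M (\<lambda>\<omega>. Y w \<omega> - Y u \<omega>) \<and> (\<integral>\<omega>. Y w \<omega> - Y u \<omega> \<partial>M) = 0"
proof -
  have ps: "prob_space M" by (rule fBm_prob[OF fBm])
  have lim: "(\<lambda>m. Sm Z \<alpha> a u w m \<omega>) \<longlonglongrightarrow> Y w \<omega> - Y u \<omega>" if "\<omega> \<in> space M" for \<omega>
    by (rule Sm_conv[OF that uw])
  note sb = Sm_sq[OF uw]
  have i: "integrable M (\<lambda>\<omega>. Y w \<omega> - Y u \<omega>)"
    by (rule vitali(1)[where C="Kc (2*H) (a u) (a w) (a u) (a w)", OF ps Sm_meas lim]) (use sb in auto)
  have t: "(\<lambda>m. \<integral>\<omega>. Sm Z \<alpha> a u w m \<omega> \<partial>M) \<longlonglongrightarrow> (\<integral>\<omega>. Y w \<omega> - Y u \<omega> \<partial>M)"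
    by (rule vitali(2)[where C="Kc (2*H) (a u) (a w) (a u) (a w)", OF ps Sm_meas lim]) (use sb in auto)
  have "(\<lambda>m. \<integral>\<omega>. Sm Z \<alpha> a u w m \<omega> \<partial>M) = (\<lambda>m. 0)" using Sm_mean by auto
  then have "(\<integral>\<omega>. Y w \<omega> - Y u \<omega> \<partial>M) = 0" using t LIMSEQ_unique[OF t] by (simp add: LIMSEQ_const_iff)
  then show ?thesis using i by simp
qed

lemma shift_eq:
  "(\<integral>\<omega>. Sm Z \<alpha> a (u + s) (w + s) m \<omega> * Sm Z \<alpha> a (u' + s) (w' + s) m \<omega> \<partial>M) =
   (\<integral>\<omega>. Sm Z \<alpha> a u w m \<omega> * Sm Z \<alpha> a u' w' m \<omega> \<partial>M)"
proof -
  define l where "l = exp (\<alpha> * s / H)"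
  have l0: "l > 0" unfolding l_def by simp
  have lp: "l powr (2*H) = exp (2 * \<alpha> * s)" unfolding l_def exp_powr_real using H by simp
  have ex: "exp (- \<alpha> * (x + s)) * exp (- \<alpha> * (y + s)) * exp (2 * \<alpha> * s) = exp (- \<alpha> * x) * exp (- \<alpha> * y)" for x y
    by (simp only: mult_exp_exp) (simp add: algebra_simps)
  have "exp (- \<alpha> * px (u + s) (w + s) m i) * exp (- \<alpha> * px (u' + s) (w' + s) m j) *
        Kc (2*H) (a (px (u + s) (w + s) m i)) (a (px (u + s) (w + s) m (Suc i)))
                 (a (px (u' + s) (w' + s) m j)) (a (px (u' + s) (w' + s) m (Suc j)))
     = exp (- \<alpha> * px u w m i) * exp (- \<alpha> * px u' w' m j) *
        Kc (2*H) (a (px u w m i)) (a (px u w m (Suc i))) (a (px u' w' m j)) (a (px u' w' m (Suc j)))" for i j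
  proof -
    have "Kc (2*H) (a (px (u + s) (w + s) m i)) (a (px (u + s) (w + s) m (Suc i)))
                 (a (px (u' + s) (w' + s) m j)) (a (px (u' + s) (w' + s) m (Suc j)))
        = l powr (2*H) * Kc (2*H) (a (px u w m i)) (a (px u w m (Suc i))) (a (px u' w' m j)) (a (px u' w' m (Suc j)))"
      unfolding px_shift a_shift l_def[symmetric] by (rule Kc_scale[OF l0])
    then show ?thesis unfolding px_shift lp using ex by (simp add: mult.assoc[symmetric])
  qed
  note T = this
  have "(\<integral>\<omega>. Sm Z \<alpha> a (u + s) (w + s) m \<omega> * Sm Z \<alpha> a (u' + s) (w' + s) m \<omega> \<partial>M) =
     (\<Sum>i<Suc m. \<Sum>j<Suc m. exp (- \<alpha> * px (u + s) (w + s) m i) * exp (- \<alpha> * px (u' + s) (w' + s) m j) *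
        Kc (2*H) (a (px (u + s) (w + s) m i)) (a (px (u + s) (w + s) m (Suc i)))
                 (a (px (u' + s) (w' + s) m j)) (a (px (u' + s) (w' + s) m (Suc j))))"
    using Sm_cov[where u="u+s" and w="w+s" and m=m and u'="u'+s" and w'="w'+s" and m'=m] by blast
  also have "\<dots> = (\<Sum>i<Suc m. \<Sum>j<Suc m. exp (- \<alpha> * px u w m i) * exp (- \<alpha> * px u' w' m j) *
        Kc (2*H) (a (px u w m i)) (a (px u w m (Suc i))) (a (px u' w' m j)) (a (px u' w' m (Suc j))))"
    by (intro sum.cong refl T)
  also have "\<dots> = (\<integral>\<omega>. Sm Z \<alpha> a u w m \<omega> * Sm Z \<alpha> a u' w' m \<omega> \<partial>M)"
    using Sm_cov[where u=u and w=w and m=m and u'=u' and w'=w' and m'=m] by simp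
  finally show ?thesis .
qed

lemma rho_bound:
  assumes n: "1 \<le> n"
  shows "exp (- \<alpha> * real n) * Kc (2*H) (a 0) (a 1) (a (real n)) (a (real n + 1))
    \<le> ((a 1 - a 0) * (2*H) * (H / \<alpha>) powr (2*H - 1) * exp (\<alpha> * (2*H - 1) / H) / 2)
       * exp (\<alpha> * ((2*H - 1) / H - 1)) ^ n"
proof -
  define q where "q = 2*H - 1"
  have q0: "0 < q" unfolding q_def using H by simp
  have ord: "0 \<le> a 0" "a 0 \<le> a 1" "a 1 \<le> a (real n)" "a (real n) \<le> a (real n + 1)"
    using a_pos[of 0] n by (auto intro!: a_le)
  have K: "Kc (2*H) (a 0) (a 1) (a (real n)) (a (real n + 1))
      \<le> (a 1 - a 0) * (2*H) * (a (real n + 1) - a 0) powr q / 2"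
    using Kc_upper[OF p1 ord] unfolding q_def by simp
  have P: "(a (real n + 1) - a 0) powr q \<le> a (real n + 1) powr q"
    using ord a_pos[of 0] q0 by (intro powr_mono2) auto
  have A: "a (real n + 1) = (H / \<alpha>) * exp (\<alpha> * (real n + 1) / H)" unfolding a_def by simp
  have A2: "a (real n + 1) powr q = (H / \<alpha>) powr q * exp (\<alpha> * (real n + 1) / H * q)"
  proof -
    have "a (real n + 1) powr q = ((H / \<alpha>) * exp (\<alpha> * (real n + 1) / H)) powr q" by (simp only: A)
    also have "\<dots> = (H / \<alpha>) powr q * exp (\<alpha> * (real n + 1) / H) powr q"
      using H \<alpha> by (intro powr_mult)
    also have "exp (\<alpha> * (real n + 1) / H) powr q = exp (\<alpha> * (real n + 1) / H * q)" by (rule exp_powr_real)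
    finally show ?thesis .
  qed
  have ab: "0 \<le> (a 1 - a 0) * (2*H) / 2" using ord H by simp
  have E: "exp (- \<alpha> * real n) * exp (\<alpha> * (real n + 1) / H * q) = exp (\<alpha> * q / H) * exp (\<alpha> * (q / H - 1)) ^ n"
  proof -
    have "exp (- \<alpha> * real n) * exp (\<alpha> * (real n + 1) / H * q) = exp (\<alpha> * q / H + real n * (\<alpha> * (q / H - 1)))"
      by (simp only: mult_exp_exp) (use H in \<open>simp add: field_simps\<close>)
    also have "\<dots> = exp (\<alpha> * q / H) * exp (\<alpha> * (q / H - 1)) ^ n"
      by (simp add: exp_add exp_of_nat_mult)
    finally show ?thesis .
  qed
  have "exp (- \<alpha> * real n) * Kc (2*H) (a 0) (a 1) (a (real n)) (a (real n + 1))
      \<le> exp (- \<alpha> * real n) * ((a 1 - a 0) * (2*H) * (a (real n + 1) - a 0) powr q / 2)"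
    using K by (intro mult_left_mono) auto
  also have "\<dots> = ((a 1 - a 0) * (2*H) / 2) * (exp (- \<alpha> * real n) * (a (real n + 1) - a 0) powr q)"
    by simp
  also have "\<dots> \<le> ((a 1 - a 0) * (2*H) / 2) * (exp (- \<alpha> * real n) * a (real n + 1) powr q)"
    using P ab by (intro mult_left_mono) auto
  also have "\<dots> = ((a 1 - a 0) * (2*H) / 2) * (H / \<alpha>) powr q * (exp (- \<alpha> * real n) * exp (\<alpha> * (real n + 1) / H * q))"
    unfolding A2 by simp
  also have "\<dots> = ((a 1 - a 0) * (2*H) * (H / \<alpha>) powr q * exp (\<alpha> * q / H) / 2) * exp (\<alpha> * (q / H - 1)) ^ n"
    unfolding E by simp
  finally show ?thesis unfolding q_def .
qed

lemma r_less: "exp (\<alpha> * ((2*H - 1) / H - 1)) < 1"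
proof -
  have "(2*H - 1) / H - 1 = (H - 1) / H" using H by (simp add: field_simps)
  also have "\<dots> < 0" using H by (simp add: divide_neg_pos)
  finally show ?thesis using \<alpha> by (simp add: mult_pos_neg)
qed

lemma main_result:
  fixes I :: "nat \<Rightarrow> 'a \<Rightarrow> real"
  assumes I_def: "\<And>n \<omega>. I n \<omega> = Y (real n + 1) \<omega> - Y (real n) \<omega>"
  shows "(\<forall>t1 t2 s1 s2. 0 \<le> t1 \<and> t1 < t2 \<and> 0 \<le> s1 \<and> s1 < s2 \<longrightarrow>
            (\<integral>\<omega>. (Y t2 \<omega> - Y t1 \<omega>) * (Y s2 \<omega> - Y s1 \<omega>) \<partial>M) > 0)
       \<and> (\<forall>n. integrable M (I n) \<and> (\<integral>\<omega>. I n \<omega> \<partial>M) = 0)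
       \<and> (\<forall>i n. integrable M (\<lambda>\<omega>. I i \<omega> * I (i + n) \<omega>) \<and>
              (\<integral>\<omega>. I i \<omega> * I (i + n) \<omega> \<partial>M) = (\<integral>\<omega>. I 0 \<omega> * I n \<omega> \<partial>M))
       \<and> convergent (\<lambda>k. \<Sum>n\<le>k. (\<integral>\<omega>. I 0 \<omega> * I n \<omega> \<partial>M))"
proof (intro conjI allI impI)
  fix t1 t2 s1 s2 :: real
  assume "0 \<le> t1 \<and> t1 < t2 \<and> 0 \<le> s1 \<and> s1 < s2"
  then have t: "0 \<le> t1" "t1 < t2" "0 \<le> s1" "s1 < s2" by auto
  define c where "c = exp (- \<alpha> * t2) * exp (- \<alpha> * s2) * Kc (2*H) (a t1) (a t2) (a s1) (a s2)"
  have c0: "c > 0" unfolding c_def using Kc_pos[OF p1 a_less[OF t(2)] a_less[OF t(4)]] by simp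
  have lp: "(\<lambda>m. \<integral>\<omega>. Sm Z \<alpha> a t1 t2 m \<omega> * Sm Z \<alpha> a s1 s2 m \<omega> \<partial>M)
           \<longlonglongrightarrow> (\<integral>\<omega>. (Y t2 \<omega> - Y t1 \<omega>) * (Y s2 \<omega> - Y s1 \<omega>) \<partial>M)"
    using lim_prod(2)[of t1 t2 s1 s2] t by simp
  have "c \<le> (\<integral>\<omega>. (Y t2 \<omega> - Y t1 \<omega>) * (Y s2 \<omega> - Y s1 \<omega>) \<partial>M)"
  proof (rule LIMSEQ_le_const[OF lp], intro exI allI impI)
    fix m :: nat
    show "c \<le> (\<integral>\<omega>. Sm Z \<alpha> a t1 t2 m \<omega> * Sm Z \<alpha> a s1 s2 m \<omega> \<partial>M)"
      unfolding c_def using Sm_bounds(1)[of t1 t2 s1 s2 m m] t by simp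
  qed
  then show "(\<integral>\<omega>. (Y t2 \<omega> - Y t1 \<omega>) * (Y s2 \<omega> - Y s1 \<omega>) \<partial>M) > 0" using c0 by simp
next
  fix n
  have Ieq: "I n = (\<lambda>\<omega>. Y (real n + 1) \<omega> - Y (real n) \<omega>)" by (simp add: fun_eq_iff I_def)
  show "integrable M (I n)" using lim_single[of "real n" "real n + 1"] unfolding Ieq by simp
  show "(\<integral>\<omega>. I n \<omega> \<partial>M) = 0" using lim_single[of "real n" "real n + 1"] unfolding Ieq by simp
next
  fix i n
  have Ieq: "I k \<omega> = Y (real k + 1) \<omega> - Y (real k) \<omega>" for k \<omega> by (rule I_def)
  show "integrable M (\<lambda>\<omega>. I i \<omega> * I (i + n) \<omega>)"
    unfolding Ieq using lim_prod(1)[of "real i" "real i + 1" "real (i + n)" "real (i + n) + 1"] by simp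
  have t1: "(\<lambda>m. \<integral>\<omega>. Sm Z \<alpha> a (real i) (real i + 1) m \<omega> * Sm Z \<alpha> a (real (i + n)) (real (i + n) + 1) m \<omega> \<partial>M)
           \<longlonglongrightarrow> (\<integral>\<omega>. I i \<omega> * I (i + n) \<omega> \<partial>M)"
    unfolding Ieq using lim_prod(2)[of "real i" "real i + 1" "real (i + n)" "real (i + n) + 1"] by simp
  have t2: "(\<lambda>m. \<integral>\<omega>. Sm Z \<alpha> a 0 1 m \<omega> * Sm Z \<alpha> a (real n) (real n + 1) m \<omega> \<partial>M)
           \<longlonglongrightarrow> (\<integral>\<omega>. I 0 \<omega> * I n \<omega> \<partial>M)"
    unfolding Ieq using lim_prod(2)[of 0 1 "real n" "real n + 1"] by simp
  have eq: "(\<integral>\<omega>. Sm Z \<alpha> a (real i) (real i + 1) m \<omega> * Sm Z \<alpha> a (real (i + n)) (real (i + n) + 1) m \<omega> \<partial>M)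
      = (\<integral>\<omega>. Sm Z \<alpha> a 0 1 m \<omega> * Sm Z \<alpha> a (real n) (real n + 1) m \<omega> \<partial>M)" for m
  proof -
    have e1: "0 + real i = real i" "1 + real i = real i + 1" "real n + real i = real (i + n)"
      "(real n + 1) + real i = real (i + n) + 1" by simp_all
    have "(\<integral>\<omega>. Sm Z \<alpha> a (0 + real i) (1 + real i) m \<omega> * Sm Z \<alpha> a (real n + real i) ((real n + 1) + real i) m \<omega> \<partial>M)
      = (\<integral>\<omega>. Sm Z \<alpha> a 0 1 m \<omega> * Sm Z \<alpha> a (real n) (real n + 1) m \<omega> \<partial>M)"
      by (rule shift_eq)
    then show ?thesis unfolding e1 .
  qed
  show "(\<integral>\<omega>. I i \<omega> * I (i + n) \<omega> \<partial>M) = (\<integral>\<omega>. I 0 \<omega> * I n \<omega> \<partial>M)"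
    using t1 unfolding eq using LIMSEQ_unique[OF _ t2] by blast
next
  define \<rho> where "\<rho> n = (\<integral>\<omega>. I 0 \<omega> * I n \<omega> \<partial>M)" for n
  define B where "B = ((a 1 - a 0) * (2*H) * (H / \<alpha>) powr (2*H - 1) * exp (\<alpha> * (2*H - 1) / H) / 2)"
  define r where "r = exp (\<alpha> * ((2*H - 1) / H - 1))"
  have Ieq: "I k \<omega> = Y (real k + 1) \<omega> - Y (real k) \<omega>" for k \<omega> by (rule I_def)
  have rb: "0 \<le> \<rho> n \<and> \<rho> n \<le> exp (- \<alpha> * real n) * Kc (2*H) (a 0) (a 1) (a (real n)) (a (real n + 1))" for n
  proof -
    have t: "(\<lambda>m. \<integral>\<omega>. Sm Z \<alpha> a 0 1 m \<omega> * Sm Z \<alpha> a (real n) (real n + 1) m \<omega> \<partial>M) \<longlonglongrightarrow> \<rho> n"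
      unfolding \<rho>_def Ieq using lim_prod(2)[of 0 1 "real n" "real n + 1"] by simp
    have lo: "0 \<le> \<rho> n"
    proof (rule LIMSEQ_le_const[OF t], intro exI allI impI)
      fix m :: nat
      have "0 \<le> exp (- \<alpha> * 1) * exp (- \<alpha> * (real n + 1)) * Kc (2*H) (a 0) (a 1) (a (real n)) (a (real n + 1))"
        using Kc_aa_nonneg[of 0 1 "real n" "real n + 1"] by simp
      also have "\<dots> \<le> (\<integral>\<omega>. Sm Z \<alpha> a 0 1 m \<omega> * Sm Z \<alpha> a (real n) (real n + 1) m \<omega> \<partial>M)"
        using Sm_bounds(1)[of 0 1 "real n" "real n + 1" m m] by simp
      finally show "0 \<le> (\<integral>\<omega>. Sm Z \<alpha> a 0 1 m \<omega> * Sm Z \<alpha> a (real n) (real n + 1) m \<omega> \<partial>M)" .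
    qed
    have hi: "\<rho> n \<le> exp (- \<alpha> * real n) * Kc (2*H) (a 0) (a 1) (a (real n)) (a (real n + 1))"
    proof (rule LIMSEQ_le_const2[OF t], intro exI allI impI)
      fix m :: nat
      show "(\<integral>\<omega>. Sm Z \<alpha> a 0 1 m \<omega> * Sm Z \<alpha> a (real n) (real n + 1) m \<omega> \<partial>M)
          \<le> exp (- \<alpha> * real n) * Kc (2*H) (a 0) (a 1) (a (real n)) (a (real n + 1))"
        using Sm_bounds(2)[of 0 1 "real n" "real n + 1" m m] by simp
    qed
    show ?thesis using lo hi by simp
  qed
  have r0: "0 < r" "r < 1" unfolding r_def using r_less by auto
  have sg: "summable (\<lambda>n. B * r ^ n)"
    using r0 by (intro summable_mult summable_geometric) simp
  have "summable \<rho>"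
  proof (rule summable_comparison_test'[OF sg])
    fix n :: nat assume "1 \<le> n"
    then show "norm (\<rho> n) \<le> B * r ^ n"
      using rb[of n] rho_bound[of n] unfolding B_def r_def by simp
  qed
  then have "(\<lambda>k. \<Sum>n\<le>k. \<rho> n) \<longlonglongrightarrow> suminf \<rho>" by (rule summable_LIMSEQ')
  then show "convergent (\<lambda>k. \<Sum>n\<le>k. (\<integral>\<omega>. I 0 \<omega> * I n \<omega> \<partial>M))"
    unfolding \<rho>_def by (rule convergentI)
qed
end


theorem corollary3p1:
  fixes M :: "'a measure" and H \<alpha> :: real and Z :: "real \<Rightarrow> 'a \<Rightarrow> real"
    and a :: "real \<Rightarrow> real" and Y :: "real \<Rightarrow> 'a \<Rightarrow> real" and I :: "nat \<Rightarrow> 'a \<Rightarrow> real"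
  assumes H: "1/2 < H" "H < 1"
    and fBm: "continuous_fBm M H Z"
    and \<alpha>: "\<alpha> > 0"
    and a_def: "\<And>t. a t = H * exp (\<alpha> * t / H) / \<alpha>"
    and Y_def: "\<And>t \<omega>. Y t \<omega> = RS_integral (\<lambda>s. exp (- \<alpha> * s)) (\<lambda>s. Z (a s) \<omega>) 0 t"
    and I_def: "\<And>n \<omega>. I n \<omega> = Y (real n + 1) \<omega> - Y (real n) \<omega>"
  shows "(\<forall>t1 t2 s1 s2. 0 \<le> t1 \<and> t1 < t2 \<and> 0 \<le> s1 \<and> s1 < s2 \<longrightarrow>
            (\<integral>\<omega>. (Y t2 \<omega> - Y t1 \<omega>) * (Y s2 \<omega> - Y s1 \<omega>) \<partial>M) > 0)
       \<and> (\<forall>n. integrable M (I n) \<and> (\<integral>\<omega>. I n \<omega> \<partial>M) = 0)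
       \<and> (\<forall>i n. integrable M (\<lambda>\<omega>. I i \<omega> * I (i + n) \<omega>) \<and>
              (\<integral>\<omega>. I i \<omega> * I (i + n) \<omega> \<partial>M) = (\<integral>\<omega>. I 0 \<omega> * I n \<omega> \<partial>M))
       \<and> convergent (\<lambda>k. \<Sum>n\<le>k. (\<integral>\<omega>. I 0 \<omega> * I n \<omega> \<partial>M))"
  by (rule main_result[OF H(1) H(2) fBm \<alpha> a_def Y_def I_def])

end
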